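(* For every $d\ge2$, the number of similarity classes of $d$-dimensional perfect lattices is at most $$I_d^{\,d+1}\binom{3^dI_d}{\binom d2}.$$
   Context: A $d$-dimensional Euclidean lattice $\Lambda$ is perfect if $\{v\otimes v\}$, $v$ ranging over its minimal vectors (nonzero vectors of minimal length), spans the $\binom{d+1}{2}$-dimensional space of symmetric tensors in $(\Lambda\otimes\mathbb R)^{\otimes2}$. A lattice is well-rounded if its minimal vectors span $\Lambda\otimes\mathbb R$. $I_d$ is the smallest integer such that whenever $\Lambda$ is a $d$-dimensional lattice and $\Lambda'\subseteq\Lambda$ is a $d$-dimensional well-rounded sublattice whose minimal vectors are all minimal vectors of $\Lambda$, the index $[\Lambda:\Lambda']$ is at most $I_d$. *)

theory Defs
  imports "HOL-Analysis.Analysis"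
begin

text \<open>Full-rank lattices in real^'n (dimension d = CARD('n)):
  the integer span of the columns of an invertible matrix.\<close>
definition is_lattice :: "(real^'n::finite) set \<Rightarrow> bool" where
  "is_lattice L \<longleftrightarrow> (\<exists>B::real^'n^'n. invertible B \<and>
      L = (\<lambda>z::int^'n. B *v (\<chi> i. real_of_int (z $ i))) ` UNIV)"

text \<open>Minimal vectors: nonzero vectors of minimal length.\<close>
definition min_vecs :: "(real^'n::finite) set \<Rightarrow> (real^'n) set" where
  "min_vecs L = {v \<in> L. v \<noteq> 0 \<and> (\<forall>w\<in>L. w \<noteq> 0 \<longrightarrow> norm v \<le> norm w)}"

text \<open>The symmetric tensor v \<otimes> v, as the matrix (v_i v_j).\<close>
definition outer_sq :: "real^'n::finite \<Rightarrow> real^'n^'n" where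
  "outer_sq v = (\<chi> i j. v $ i * v $ j)"

definition perfect :: "(real^'n::finite) set \<Rightarrow> bool" where
  "perfect L \<longleftrightarrow> span (outer_sq ` min_vecs L) = {M. transpose M = M}"

definition well_rounded :: "(real^'n::finite) set \<Rightarrow> bool" where
  "well_rounded L \<longleftrightarrow> span (min_vecs L) = UNIV"

text \<open>Index [L : L'] = number of cosets of L' in L.\<close>
definition lat_index :: "(real^'n::finite) set \<Rightarrow> (real^'n) set \<Rightarrow> nat" where
  "lat_index L L' = card ((\<lambda>v. {w \<in> L. w - v \<in> L'}) ` L)"

text \<open>The constant I_d for d = CARD('n).\<close>
definition I_const :: "'n::finite itself \<Rightarrow> nat" where
  "I_const _ = (LEAST k. \<forall>(L::(real^'n) set) L'. is_lattice L \<and> is_lattice L' \<and> L' \<subseteq> L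
      \<and> well_rounded L' \<and> min_vecs L' \<subseteq> min_vecs L \<longrightarrow> lat_index L L' \<le> k)"

text \<open>Similarity: a positive scaling composed with an orthogonal transformation.\<close>
definition similar_lat :: "(real^'n::finite) set \<Rightarrow> (real^'n) set \<Rightarrow> bool" where
  "similar_lat L1 L2 \<longleftrightarrow> (\<exists>c f. c > 0 \<and> orthogonal_transformation f \<and>
      L2 = (\<lambda>v. c *\<^sub>R f v) ` L1)"

definition similarity_rel :: "((real^'n::finite) set \<times> (real^'n) set) set" where
  "similarity_rel = {(L1, L2). similar_lat L1 L2}"

end

theory Submission
  imports Defs
begin


(* ---- part 1 ---- *)

definition isint :: "real^'n::finite \<Rightarrow> bool" where
  "isint x \<longleftrightarrow> (\<forall>i. x$i \<in> \<int>)"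

definition lat_of :: "real^'n^'n \<Rightarrow> (real^'n::finite) set" where
  "lat_of B = {x. isint (matrix_inv B *v x)}"

lemma isint_0[simp]: "isint 0" by (simp add: isint_def)
lemma isint_add: "isint x \<Longrightarrow> isint y \<Longrightarrow> isint (x+y)" by (simp add: isint_def)
lemma isint_diff: "isint x \<Longrightarrow> isint y \<Longrightarrow> isint (x-y)" by (simp add: isint_def)
lemma isint_minus: "isint x \<Longrightarrow> isint (-x)" by (simp add: isint_def)
lemma isint_scale: "isint x \<Longrightarrow> isint (of_int n *\<^sub>R x)" by (simp add: isint_def)
lemma isint_axis: "isint (axis i 1)" by (simp add: isint_def axis_def)

lemma isint_sum: "(\<And>j. j \<in> A \<Longrightarrow> isint (f j)) \<Longrightarrow> isint (sum f A)"
  by (induction A rule: infinite_finite_induct) (auto intro: isint_add)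

lemma matrix_inv_both:
  assumes "invertible (A::real^'n^'n)"
  shows "A ** matrix_inv A = mat 1 \<and> matrix_inv A ** A = mat 1"
proof -
  from assms obtain A' where "A ** A' = mat 1 \<and> A' ** A = mat 1" unfolding invertible_def by blast
  then show ?thesis unfolding matrix_inv_def by (rule someI)
qed

lemma matrix_inv_left: "invertible (A::real^'n^'n) \<Longrightarrow> matrix_inv A ** A = mat 1"
  using matrix_inv_both by blast
lemma matrix_inv_right: "invertible (A::real^'n^'n) \<Longrightarrow> A ** matrix_inv A = mat 1"
  using matrix_inv_both by blast
lemma matrix_inv_vl: "invertible (A::real^'n^'n) \<Longrightarrow> matrix_inv A *v (A *v x) = x"
  by (simp add: matrix_vector_mul_assoc matrix_inv_left)
lemma matrix_inv_vr: "invertible (A::real^'n^'n) \<Longrightarrow> A *v (matrix_inv A *v x) = x"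
  by (simp add: matrix_vector_mul_assoc matrix_inv_right)
lemma invertible_matrix_inv: "invertible (A::real^'n^'n) \<Longrightarrow> invertible (matrix_inv A)"
  unfolding invertible_def using matrix_inv_both by (metis invertible_def)

lemma is_lattice_iff: "is_lattice L \<longleftrightarrow> (\<exists>B. invertible B \<and> L = lat_of B)"
proof -
  have eq: "(\<lambda>z::int^'a. B *v (\<chi> i. real_of_int (z $ i))) ` UNIV = lat_of B"
    if inv: "invertible B" for B :: "real^'a^'a::finite"
  proof (intro set_eqI iffI)
    fix x assume "x \<in> (\<lambda>z::int^'a. B *v (\<chi> i. real_of_int (z $ i))) ` UNIV"
    then obtain z where x: "x = B *v (\<chi> i. real_of_int (z $ i))" by auto
    have "matrix_inv B *v x = (\<chi> i. real_of_int (z $ i))"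
      using inv by (simp add: x matrix_vector_mul_assoc matrix_inv_left)
    then show "x \<in> lat_of B" by (simp add: lat_of_def isint_def)
  next
    fix x assume "x \<in> lat_of B"
    then have h: "\<forall>i. (matrix_inv B *v x)$i \<in> \<int>" by (simp add: lat_of_def isint_def)
    define z where "z = (\<chi> i. \<lfloor>(matrix_inv B *v x)$i\<rfloor>)"
    have "(\<chi> i. real_of_int (z $ i)) = matrix_inv B *v x"
      using h by (simp add: z_def vec_eq_iff)
    then have "B *v (\<chi> i. real_of_int (z $ i)) = x"
      using inv by (simp add: matrix_vector_mul_assoc matrix_inv_right)
    then show "x \<in> (\<lambda>z::int^'a. B *v (\<chi> i. real_of_int (z $ i))) ` UNIV" by (metis rangeI)
  qed
  show ?thesis unfolding is_lattice_def using eq by metis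
qed

lemma lat_of_0: "0 \<in> lat_of B" by (simp add: lat_of_def)
lemma lat_of_add: "x \<in> lat_of B \<Longrightarrow> y \<in> lat_of B \<Longrightarrow> x + y \<in> lat_of B"
  by (simp add: lat_of_def matrix_vector_right_distrib isint_add)
lemma lat_of_diff: "x \<in> lat_of B \<Longrightarrow> y \<in> lat_of B \<Longrightarrow> x - y \<in> lat_of B"
  by (simp add: lat_of_def matrix_vector_mult_diff_distrib isint_diff)
lemma lat_of_scale: "x \<in> lat_of B \<Longrightarrow> of_int n *\<^sub>R x \<in> lat_of B"
  by (simp add: lat_of_def matrix_vector_mult_scaleR isint_scale)

definition vecset :: "real set \<Rightarrow> (real^'n::finite) set" where
  "vecset T = {x. \<forall>i. x$i \<in> T}"

lemma vecset_eq: "vecset T = vec_lambda ` (PiE UNIV (\<lambda>_. T))"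
proof (intro set_eqI iffI)
  fix x :: "real^'n" assume "x \<in> vecset T"
  then have "vec_nth x \<in> PiE UNIV (\<lambda>_. T)" by (simp add: vecset_def PiE_UNIV_domain)
  then show "x \<in> vec_lambda ` (PiE UNIV (\<lambda>_. T))" by (metis image_eqI vec_nth_inverse)
qed (auto simp: vecset_def)

lemma finite_vecset: "finite T \<Longrightarrow> finite (vecset T :: (real^'n::finite) set)"
  unfolding vecset_eq by (intro finite_imageI finite_PiE) auto

lemma card_vecset: "finite T \<Longrightarrow> card (vecset T :: (real^'n::finite) set) = card T ^ CARD('n)"
proof -
  assume T: "finite T"
  have "inj_on (vec_lambda :: ('n \<Rightarrow> real) \<Rightarrow> real^'n) (PiE UNIV (\<lambda>_. T))"
    by (intro inj_onI) (metis vec_lambda_inverse UNIV_I)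
  then show ?thesis unfolding vecset_eq using T
    by (simp add: card_image card_PiE)
qed

lemma finite_lat_ball:
  assumes "invertible B"
  shows "finite {x \<in> lat_of B. norm x \<le> r}"
proof -
  obtain K where K: "\<And>x. norm (matrix_inv B *v x) \<le> norm x * K"
    using bounded_linear.bounded[OF matrix_vector_mul_bounded_linear] by blast
  define R where "R = \<lceil>\<bar>r * K\<bar>\<rceil>"
  define T where "T = real_of_int ` {-R..R}"
  have "{x \<in> lat_of B. norm x \<le> r} \<subseteq> (\<lambda>c. B *v c) ` vecset T"
  proof
    fix x assume x: "x \<in> {x \<in> lat_of B. norm x \<le> r}"
    define c where "c = matrix_inv B *v x"
    have xc: "x = B *v c" using assms by (simp add: c_def matrix_vector_mul_assoc matrix_inv_right)
    have "\<forall>i. c$i \<in> T"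
    proof
      fix i
      have ci: "c$i \<in> \<int>" using x by (simp add: c_def lat_of_def isint_def)
      have "\<bar>c$i\<bar> \<le> norm c" by (rule component_le_norm_cart)
      also have "\<dots> \<le> norm x * K" using K c_def by simp
      also have "\<dots> \<le> \<bar>r * K\<bar>"
      proof -
        have "norm x * K \<le> \<bar>norm x * K\<bar>" by simp
        also have "\<dots> = norm x * \<bar>K\<bar>" by (simp add: abs_mult)
        also have "\<dots> \<le> \<bar>r\<bar> * \<bar>K\<bar>" using x by (intro mult_right_mono) auto
        finally show ?thesis by (simp add: abs_mult)
      qed
      finally have b: "\<bar>c$i\<bar> \<le> \<bar>r * K\<bar>" .
      from ci obtain m where m: "c$i = of_int m" by (auto elim: Ints_cases)
      have "\<bar>m\<bar> \<le> R" using b m unfolding R_def by linarith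
      then have "m \<in> {-R..R}" by auto
      then show "c$i \<in> T" using m unfolding T_def by (simp add: rev_image_eqI)
    qed
    then have "c \<in> vecset T" by (simp add: vecset_def)
    then show "x \<in> (\<lambda>c. B *v c) ` vecset T" using xc by auto
  qed
  moreover have "finite (vecset T :: (real^'a) set)" unfolding T_def by (intro finite_vecset) auto
  ultimately show ?thesis by (meson finite_imageI finite_subset)
qed


(* ---- part 2 ---- *)

lemma card_factor:
  assumes "\<forall>x\<in>A. \<forall>y\<in>A. f x = f y \<longrightarrow> g x = g y" "finite (f ` A)"
  shows "finite (g ` A) \<and> card (g ` A) \<le> card (f ` A)"
proof -
  define h where "h u = g (SOME x. x \<in> A \<and> f x = u)" for u
  have "g ` A = h ` (f ` A)"
  proof (intro set_eqI iffI)
    fix z assume "z \<in> g ` A"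
    then obtain x where x: "x \<in> A" "z = g x" by auto
    have "\<exists>x'. x' \<in> A \<and> f x' = f x" using x by auto
    then have "(SOME x'. x' \<in> A \<and> f x' = f x) \<in> A \<and> f (SOME x'. x' \<in> A \<and> f x' = f x) = f x"
      by (rule someI_ex)
    then have "h (f x) = g x" unfolding h_def using assms(1) x(1) by blast
    then show "z \<in> h ` (f ` A)" using x by (metis image_eqI)
  next
    fix z assume "z \<in> h ` (f ` A)"
    then obtain x where x: "x \<in> A" "z = h (f x)" by auto
    have "\<exists>x'. x' \<in> A \<and> f x' = f x" using x by auto
    then have "(SOME x'. x' \<in> A \<and> f x' = f x) \<in> A \<and> f (SOME x'. x' \<in> A \<and> f x' = f x) = f x"
      by (rule someI_ex)
    then have "h (f x) = g x" unfolding h_def using assms(1) x(1) by blast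
    then show "z \<in> g ` A" using x by auto
  qed
  then show ?thesis using assms(2) by (simp add: card_image_le)
qed

section \<open>Minimal vectors\<close>

lemma lat_of_nonzero:
  assumes "invertible B"
  shows "B *v axis i 1 \<in> lat_of B" "B *v axis i 1 \<noteq> 0"
proof -
  show "B *v axis i 1 \<in> lat_of B" using assms by (simp add: lat_of_def matrix_inv_vl isint_axis)
  show "B *v axis i 1 \<noteq> 0"
  proof
    assume "B *v axis i 1 = 0"
    then have "matrix_inv B *v (B *v axis i 1) = 0" by simp
    then show False using assms by (simp add: matrix_inv_vl axis_eq_0_iff)
  qed
qed

lemma min_vecs_exists:
  assumes "invertible B"
  shows "\<exists>v. v \<in> min_vecs (lat_of B)"
proof -
  define b where "b = B *v axis (undefined::'a) 1"
  have b: "b \<in> lat_of B" "b \<noteq> 0" using lat_of_nonzero[OF assms] by (auto simp: b_def)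
  define F where "F = {x \<in> lat_of B. norm x \<le> norm b} - {0}"
  have fin: "finite F" unfolding F_def using finite_lat_ball[OF assms] by auto
  have ne: "F \<noteq> {}" using b unfolding F_def by auto
  obtain v where v: "v \<in> F" "\<forall>y\<in>F. norm v \<le> norm y"
    using ex_min_if_finite[of "norm ` F"] fin ne
    by (metis (mono_tags, lifting) arg_min_if_finite(1) arg_min_if_finite(2) linorder_not_le)
  have "v \<in> min_vecs (lat_of B)"
    unfolding min_vecs_def
  proof (intro CollectI conjI ballI impI)
    show "v \<in> lat_of B" "v \<noteq> 0" using v(1) unfolding F_def by auto
    fix w assume w: "w \<in> lat_of B" "w \<noteq> 0"
    show "norm v \<le> norm w"
    proof (cases "norm w \<le> norm b")
      case True then have "w \<in> F" using w unfolding F_def by auto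
      then show ?thesis using v by auto
    next
      case False then show ?thesis using v(1) unfolding F_def by auto
    qed
  qed
  then show ?thesis by blast
qed

lemma min_vecs_norm_eq: "v \<in> min_vecs L \<Longrightarrow> w \<in> min_vecs L \<Longrightarrow> norm v = norm w"
  unfolding min_vecs_def by (auto intro: antisym)

lemma min_vecs_le: "v \<in> min_vecs L \<Longrightarrow> w \<in> L \<Longrightarrow> w \<noteq> 0 \<Longrightarrow> norm v \<le> norm w"
  unfolding min_vecs_def by auto

lemma finite_min_vecs:
  assumes "invertible B"
  shows "finite (min_vecs (lat_of B))"
proof -
  obtain v where v: "v \<in> min_vecs (lat_of B)" using min_vecs_exists[OF assms] by blast
  have "min_vecs (lat_of B) \<subseteq> {x \<in> lat_of B. norm x \<le> norm v}"
    using v min_vecs_norm_eq unfolding min_vecs_def by fastforce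
  then show ?thesis using finite_lat_ball[OF assms] finite_subset by blast
qed

section \<open>Fractional parts\<close>

definition vfloor :: "real^'n::finite \<Rightarrow> real^'n" where
  "vfloor x = (\<chi> i. of_int \<lfloor>x$i\<rfloor>)"
definition vfrac :: "real^'n::finite \<Rightarrow> real^'n" where
  "vfrac x = x - vfloor x"

lemma isint_vfloor: "isint (vfloor x)" by (simp add: isint_def vfloor_def)

lemma vfrac_eq_iff: "vfrac x = vfrac y \<longleftrightarrow> isint (x - y)"
proof
  assume "vfrac x = vfrac y"
  then have "x - y = vfloor x - vfloor y" unfolding vfrac_def by (simp add: algebra_simps)
  then show "isint (x - y)" by (simp add: isint_diff isint_vfloor)
next
  assume h: "isint (x - y)"
  show "vfrac x = vfrac y"
  proof (unfold vec_eq_iff, rule allI)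
    fix i
    from h have "x$i - y$i \<in> \<int>" by (simp add: isint_def)
    then obtain m where m: "x$i = y$i + of_int m" by (metis Ints_cases add.commute diff_add_cancel)
    have "\<lfloor>x$i\<rfloor> = \<lfloor>y$i\<rfloor> + m" by (simp add: m)
    then show "vfrac x $ i = vfrac y $ i" by (simp add: vfrac_def vfloor_def m)
  qed
qed

lemma vfrac_bounds: "0 \<le> vfrac x $ i" "vfrac x $ i < 1"
  by (simp_all add: vfrac_def vfloor_def) linarith+

lemma vfrac_isint: "isint (x - vfrac x)"
  by (simp add: vfrac_def isint_vfloor)


(* ---- part 3 ---- *)

definition cols :: "('n \<Rightarrow> real^'n) \<Rightarrow> real^'n^'n::finite" where
  "cols f = (\<chi> r c. f c $ r)"

lemma cols_mult: "cols f *v x = (\<Sum>c\<in>UNIV. x$c *\<^sub>R f c)"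
  by (simp add: vec_eq_iff cols_def matrix_vector_mult_def sum_component mult.commute)

lemma cols_axis:
  fixes f :: "'n::finite \<Rightarrow> real^'n"
  shows "cols f *v axis i 1 = f i"
proof -
  have "(\<lambda>c. (axis i 1::real^'n)$c *\<^sub>R f c) = (\<lambda>c. if c = i then f c else 0)"
    by (auto simp: axis_def)
  then show ?thesis by (simp only: cols_mult) simp
qed

lemma norm_cols_mult: "norm (cols f *v x) \<le> (\<Sum>c\<in>UNIV. \<bar>x$c\<bar> * norm (f c))"
  unfolding cols_mult by (rule order_trans[OF norm_sum]) simp

lemma floor_eq_close:
  fixes a b :: real
  assumes "\<lfloor>a\<rfloor> = \<lfloor>b\<rfloor>" shows "\<bar>a - b\<bar> < 1"
  using assms by linarith

lemma cell_bound:
  fixes L L' :: "(real^'n::finite) set" and f :: "'n \<Rightarrow> real^'n"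
  assumes V: "invertible (cols f)"
    and Ldiff: "\<And>x y. x \<in> L \<Longrightarrow> y \<in> L \<Longrightarrow> x - y \<in> L"
    and L'add: "\<And>x y. x \<in> L' \<Longrightarrow> y \<in> L' \<Longrightarrow> x + y \<in> L'"
    and L'diff: "\<And>x y. x \<in> L' \<Longrightarrow> y \<in> L' \<Longrightarrow> x - y \<in> L'"
    and sub: "L' \<subseteq> L" "lat_of (cols f) \<subseteq> L'"
    and short: "\<And>i w. w \<in> L \<Longrightarrow> w \<noteq> 0 \<Longrightarrow> norm (f i) \<le> norm w"
  shows "finite ((\<lambda>v. {w \<in> L. w - v \<in> L'}) ` L) \<and>
         card ((\<lambda>v. {w \<in> L. w - v \<in> L'}) ` L) \<le> (CARD('n)+1)^CARD('n)"
proof -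
  define d where "d = CARD('n)"
  define Vi where "Vi = matrix_inv (cols f)"
  define cell where "cell x = (\<chi> i. real_of_int \<lfloor>(real d + 1) * vfrac (Vi *v x) $ i\<rfloor>)" for x :: "real^'n"
  define T where "T = real_of_int ` {0..int d}"
  have cellT: "cell x \<in> vecset T" for x
  proof -
    have "\<lfloor>(real d + 1) * vfrac (Vi *v x) $ i\<rfloor> \<in> {0..int d}" for i
    proof -
      have a: "0 \<le> vfrac (Vi *v x) $ i" "vfrac (Vi *v x) $ i < 1" by (rule vfrac_bounds)+
      have b1: "0 \<le> (real d + 1) * vfrac (Vi *v x) $ i" using a by simp
      have "(real d + 1) * vfrac (Vi *v x) $ i < real d + 1" using a by simp
      then have "\<lfloor>(real d + 1) * vfrac (Vi *v x) $ i\<rfloor> \<le> int d" by (simp add: floor_le_iff)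
      then show ?thesis using b1 by auto
    qed
    then show ?thesis unfolding vecset_def cell_def T_def by (auto intro: imageI)
  qed
  have inlat: "cols f *v (Vi *v x - vfrac (Vi *v x)) \<in> L'" for x
  proof -
    have "cols f *v (Vi *v x - vfrac (Vi *v x)) \<in> lat_of (cols f)"
      unfolding lat_of_def Vi_def using V by (simp add: matrix_inv_vl vfrac_isint)
    then show ?thesis using sub by auto
  qed
  have key: "x - y \<in> L'" if xy: "x \<in> L" "y \<in> L" "cell x = cell y" for x y
  proof -
    define t where "t = Vi *v x"
    define s where "s = Vi *v y"
    define \<delta> where "\<delta> = vfrac t - vfrac s"
    have dl: "\<bar>\<delta>$i\<bar> < 1 / (real d + 1)" for i
    proof -
      have "\<lfloor>(real d + 1) * vfrac t $ i\<rfloor> = \<lfloor>(real d + 1) * vfrac s $ i\<rfloor>"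
        using xy(3) unfolding cell_def t_def s_def by (simp add: vec_eq_iff)
      then have "\<bar>(real d + 1) * vfrac t $ i - (real d + 1) * vfrac s $ i\<bar> < 1" by (rule floor_eq_close)
      then have "(real d + 1) * \<bar>\<delta>$i\<bar> < 1" unfolding \<delta>_def
        by (simp add: right_diff_distrib[symmetric] abs_mult)
      then show ?thesis by (simp add: field_simps)
    qed
    define u where "u = cols f *v \<delta>"
    have xt: "cols f *v t = x" "cols f *v s = y" using V by (simp_all add: t_def s_def Vi_def matrix_inv_vr)
    have u_eq: "u = (x - cols f *v (t - vfrac t)) - (y - cols f *v (s - vfrac s))"
      unfolding u_def \<delta>_def using xt by (simp add: matrix_vector_mult_diff_distrib algebra_simps)
    have "u \<in> L" unfolding u_eq
      using inlat[of x] inlat[of y] sub(1) xy by (intro Ldiff) (auto simp: t_def s_def)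
    have "u = 0"
    proof (rule ccontr)
      assume u0: "u \<noteq> 0"
      have fi: "norm (f i) \<le> norm u" for i using short[OF \<open>u \<in> L\<close> u0] .
      have "norm u \<le> (\<Sum>c\<in>UNIV. \<bar>\<delta>$c\<bar> * norm (f c))" unfolding u_def by (rule norm_cols_mult)
      also have "\<dots> \<le> (\<Sum>c\<in>(UNIV::'n set). 1 / (real d + 1) * norm u)"
        by (intro sum_mono mult_mono) (use dl fi in \<open>auto intro: less_imp_le\<close>)
      also have "\<dots> = real d / (real d + 1) * norm u" by (simp add: d_def)
      also have "\<dots> < norm u" using u0 by (simp add: field_simps)
      finally show False by simp
    qed
    then have "x - y = cols f *v (t - vfrac t) - cols f *v (s - vfrac s)"
      using u_eq by (simp add: algebra_simps)
    then show ?thesis using inlat[of x] inlat[of y] L'diff by (simp add: t_def s_def)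
  qed
  have fac: "\<forall>x\<in>L. \<forall>y\<in>L. cell x = cell y \<longrightarrow> {w \<in> L. w - x \<in> L'} = {w \<in> L. w - y \<in> L'}"
  proof (intro ballI impI set_eqI iffI)
    fix x y w assume xy: "x \<in> L" "y \<in> L" "cell x = cell y"
    have k1: "x - y \<in> L'" using key xy by blast
    { assume "w \<in> {w \<in> L. w - x \<in> L'}"
      then have "w \<in> L" "w - x \<in> L'" by auto
      then have "(w - x) + (x - y) \<in> L'" using k1 L'add by blast
      then show "w \<in> {w \<in> L. w - y \<in> L'}" using \<open>w \<in> L\<close> by simp }
    { assume "w \<in> {w \<in> L. w - y \<in> L'}"
      then have "w \<in> L" "w - y \<in> L'" by auto
      then have "(w - y) - (x - y) \<in> L'" using k1 L'diff by blast
      then show "w \<in> {w \<in> L. w - x \<in> L'}" using \<open>w \<in> L\<close> by simp }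
  qed
  have finT: "finite T" unfolding T_def by simp
  have cT: "card T = d + 1" unfolding T_def by (simp add: card_image inj_on_def)
  have "cell ` L \<subseteq> vecset T" using cellT by auto
  then have fc: "finite (cell ` L)" "card (cell ` L) \<le> card (vecset T :: (real^'n) set)"
    using finite_vecset[OF finT] by (auto intro: finite_subset card_mono)
  have "card (vecset T :: (real^'n) set) = (d+1)^d" using card_vecset[OF finT] cT d_def by simp
  then show ?thesis using card_factor[OF fac fc(1)] fc(2) d_def by simp
qed


(* ---- part 4 ---- *)

lemma basis_from_span:
  assumes "span S = (UNIV :: (real^'n::finite) set)"
  obtains g :: "'n \<Rightarrow> real^'n" where "\<And>i. g i \<in> S" "invertible (cols g)"
proof -
  obtain B where B: "B \<subseteq> S" "independent B" "S \<subseteq> span B"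
    using maximal_independent_subset[of S] by blast
  have "span S \<subseteq> span B" using span_minimal[OF B(3) subspace_span] .
  then have spB: "span B = UNIV" using assms by auto
  have finB: "finite B" using B(2) by (simp add: independent_bound)
  have "card B = dim (UNIV :: (real^'n) set)" using basis_card_eq_dim[of B UNIV] B spB by simp
  then have cB: "card B = CARD('n)" by simp
  obtain g where g: "bij_betw g (UNIV::'n set) B"
    using finite_same_card_bij[of "UNIV::'n set" B] finB cB by auto
  have "surj ((*v) (cols g))"
  proof -
    { fix y :: "real^'n"
      have "y \<in> span B" using spB by simp
      then obtain u where y: "y = (\<Sum>v\<in>B. u v *\<^sub>R v)" using span_finite[OF finB] by auto
      have "(\<Sum>v\<in>B. u v *\<^sub>R v) = (\<Sum>c\<in>UNIV. u (g c) *\<^sub>R g c)"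
        using sum.reindex_bij_betw[OF g, of "\<lambda>v. u v *\<^sub>R v"] by simp
      also have "\<dots> = cols g *v (\<chi> c. u (g c))" by (simp add: cols_mult)
      finally have "y \<in> range ((*v) (cols g))" using y by auto }
    then show ?thesis by auto
  qed
  then have "invertible (cols g)"
    using matrix_right_invertible_surjective invertible_right_inverse by blast
  moreover have "\<And>i. g i \<in> S" using g B(1) bij_betwE by blast
  ultimately show ?thesis using that by blast
qed

lemma lat_of_sum: "(\<And>j. j \<in> A \<Longrightarrow> f j \<in> lat_of B) \<Longrightarrow> sum f A \<in> lat_of B"
  by (induction A rule: infinite_finite_induct) (auto intro: lat_of_add lat_of_0)

lemma lat_of_cols_sub:
  fixes g :: "'n::finite \<Rightarrow> real^'n"
  assumes "invertible (cols g)" "\<And>i. g i \<in> lat_of B"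
  shows "lat_of (cols g) \<subseteq> lat_of B"
proof
  fix x assume x: "x \<in> lat_of (cols g)"
  define c where "c = matrix_inv (cols g) *v x"
  have ci: "isint c" using x by (simp add: c_def lat_of_def)
  have "x = cols g *v c" using assms(1) by (simp add: c_def matrix_inv_vr)
  also have "\<dots> = (\<Sum>i\<in>UNIV. c$i *\<^sub>R g i)" by (rule cols_mult)
  finally have xe: "x = (\<Sum>i\<in>UNIV. c$i *\<^sub>R g i)" .
  have "c$i *\<^sub>R g i \<in> lat_of B" for i
  proof -
    from ci have "c$i \<in> \<int>" by (simp add: isint_def)
    then obtain m where "c$i = of_int m" by (auto elim: Ints_cases)
    then show ?thesis using lat_of_scale[OF assms(2)] by simp
  qed
  then show "x \<in> lat_of B" unfolding xe by (intro lat_of_sum)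
qed

lemma index_finite_bound:
  fixes L L' :: "(real^'n::finite) set"
  assumes L: "is_lattice L" and L': "is_lattice L'" and sub: "L' \<subseteq> L"
    and wr: "well_rounded L'" and mv: "min_vecs L' \<subseteq> min_vecs L"
  shows "finite ((\<lambda>v. {w \<in> L. w - v \<in> L'}) ` L) \<and> lat_index L L' \<le> (CARD('n)+1)^CARD('n)"
proof -
  obtain B where B: "invertible B" "L = lat_of B" using L is_lattice_iff by blast
  obtain B' where B': "invertible B'" "L' = lat_of B'" using L' is_lattice_iff by blast
  obtain g where g: "\<And>i. g i \<in> min_vecs L'" "invertible (cols g)"
    using basis_from_span wr unfolding well_rounded_def by metis
  have gL': "g i \<in> L'" for i using g(1) unfolding min_vecs_def by auto
  have "lat_of (cols g) \<subseteq> L'" using lat_of_cols_sub[OF g(2), of B'] gL' B'(2) by auto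
  moreover have "norm (g i) \<le> norm w" if "w \<in> L" "w \<noteq> 0" for i w
    using g(1) mv min_vecs_le that by blast
  ultimately have "finite ((\<lambda>v. {w \<in> L. w - v \<in> L'}) ` L) \<and>
         card ((\<lambda>v. {w \<in> L. w - v \<in> L'}) ` L) \<le> (CARD('n)+1)^CARD('n)"
    apply (intro cell_bound[OF g(2)])
    subgoal using B(2) lat_of_diff by blast
    subgoal using B'(2) lat_of_add by blast
    subgoal using B'(2) lat_of_diff by blast
    subgoal using sub by blast
    subgoal by blast
    subgoal by blast
    done
  then show ?thesis unfolding lat_index_def by simp
qed

lemma I_const_prop:
  fixes L L' :: "(real^'n::finite) set"
  assumes "is_lattice L" "is_lattice L'" "L' \<subseteq> L" "well_rounded L'" "min_vecs L' \<subseteq> min_vecs L"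
  shows "lat_index L L' \<le> I_const TYPE('n)"
proof -
  let ?P = "\<lambda>k. \<forall>(L::(real^'n) set) L'. is_lattice L \<and> is_lattice L' \<and> L' \<subseteq> L
      \<and> well_rounded L' \<and> min_vecs L' \<subseteq> min_vecs L \<longrightarrow> lat_index L L' \<le> k"
  have "?P ((CARD('n)+1)^CARD('n))" using index_finite_bound by blast
  then have "?P (LEAST k. ?P k)" by (rule LeastI)
  then show ?thesis unfolding I_const_def using assms by blast
qed


(* ---- part 5 ---- *)

definition DS :: "nat \<Rightarrow> nat \<Rightarrow> ((nat \<Rightarrow> nat) \<times> (nat \<Rightarrow> nat \<Rightarrow> nat)) set" where
  "DS d I = {(a,k). a \<in> {..<d} \<rightarrow>\<^sub>E {1..} \<and> prod a {..<d} \<le> I \<and>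
     k \<in> PiE {..<d} (\<lambda>j. PiE {..<j} (\<lambda>i. {..<a j}))}"

lemma DS_card: "finite (DS d I) \<and> card (DS d I) \<le> I ^ d"
proof (induction d arbitrary: I)
  case 0
  have "DS 0 I \<subseteq> {(\<lambda>_. undefined, \<lambda>_. undefined)}"
    unfolding DS_def by auto
  moreover have "card {(\<lambda>_::nat. undefined::nat, \<lambda>_::nat. undefined::nat\<Rightarrow>nat)} = 1" by simp
  ultimately show ?case using card_mono[of "{(\<lambda>_::nat. undefined::nat, \<lambda>_::nat. undefined::nat\<Rightarrow>nat)}" "DS 0 I"]
    by (simp add: finite_subset)
next
  case (Suc d)
  define Sig where "Sig = (SIGMA e:{1..I}. ({..<d} \<rightarrow>\<^sub>E {..<e}) \<times> DS d (I div e))"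
  define F where "F = (\<lambda>(e::nat, \<kappa>::nat \<Rightarrow> nat, (a::nat\<Rightarrow>nat, k::nat\<Rightarrow>nat\<Rightarrow>nat)). (a(d := e), k(d := \<kappa>)))"
  have sub: "DS (Suc d) I \<subseteq> F ` Sig"
  proof
    fix p assume p: "p \<in> DS (Suc d) I"
    obtain a k where ak: "p = (a,k)" by fastforce
    have a: "a \<in> {..<Suc d} \<rightarrow>\<^sub>E {1..}" and pr: "prod a {..<Suc d} \<le> I"
      and k: "k \<in> PiE {..<Suc d} (\<lambda>j. PiE {..<j} (\<lambda>i. {..<a j}))" using p ak by (auto simp: DS_def)
    define e where "e = a d"
    have e1: "1 \<le> e" using PiE_mem[OF a, of d] by (simp add: e_def)
    define a' where "a' = restrict a {..<d}"
    define k' where "k' = restrict k {..<d}"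
    have a': "a' \<in> {..<d} \<rightarrow>\<^sub>E {1..}" unfolding a'_def
      by (rule restrict_PiE_iff[THEN iffD2]) (use PiE_mem[OF a] in simp)
    have q1: "prod a {..<Suc d} = prod a {..<d} * e" by (simp add: e_def)
    have q2: "prod a' {..<d} = prod a {..<d}" unfolding a'_def by (intro prod.cong) auto
    have pe: "prod a' {..<d} * e \<le> I" using pr unfolding q1 q2 .
    have "1 \<le> prod a' {..<d}" using PiE_mem[OF a'] by (intro prod_ge_1) auto
    then have "e \<le> I" using pe by (metis le_trans mult_le_mono1 mult_1)
    then have e: "e \<in> {1..I}" using e1 by simp
    note pe
    then have pr': "prod a' {..<d} \<le> I div e" using e by (simp add: less_eq_div_iff_mult_less_eq)
    have k': "k' \<in> PiE {..<d} (\<lambda>j. PiE {..<j} (\<lambda>i. {..<a' j}))"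
      using k by (auto simp: k'_def a'_def PiE_iff)
    have kd: "k d \<in> {..<d} \<rightarrow>\<^sub>E {..<e}" using k by (auto simp: e_def PiE_iff)
    have "(a', k') \<in> DS d (I div e)" using a' k' pr' by (simp add: DS_def)
    then have mem: "(e, k d, (a', k')) \<in> Sig" using e kd by (simp add: Sig_def)
    have "a'(d := e) = a"
    proof
      fix x show "(a'(d := e)) x = a x"
      proof (cases "x < d")
        case True then show ?thesis by (simp add: a'_def)
      next
        case False
        show ?thesis
        proof (cases "x = d")
          case True then show ?thesis by (simp add: e_def)
        next
          case False': False
          then have "x \<notin> {..<Suc d}" using False by simp
          then have "a x = undefined" using PiE_arb[OF a] by blast
          moreover have "a' x = undefined" using False by (simp add: a'_def)
          ultimately show ?thesis using False' by simp
        qed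
      qed
    qed
    moreover have "k'(d := k d) = k"
    proof
      fix x show "(k'(d := k d)) x = k x"
      proof (cases "x < d")
        case True then show ?thesis by (simp add: k'_def)
      next
        case False
        show ?thesis
        proof (cases "x = d")
          case True then show ?thesis by simp
        next
          case False': False
          then have "x \<notin> {..<Suc d}" using False by simp
          then have "k x = undefined" using PiE_arb[OF k] by blast
          moreover have "k' x = undefined" using False by (simp add: k'_def)
          ultimately show ?thesis using False' by simp
        qed
      qed
    qed
    ultimately have "F (e, k d, (a', k')) = p" by (simp add: F_def ak)
    then show "p \<in> F ` Sig" using mem by (metis image_eqI)
  qed
  have fin: "finite Sig" unfolding Sig_def using Suc.IH by (auto intro!: finite_SigmaI finite_PiE)
  have "card Sig = (\<Sum>e\<in>{1..I}. card (({..<d} \<rightarrow>\<^sub>E {..<e}) \<times> DS d (I div e)))"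
    unfolding Sig_def using Suc.IH by (intro card_SigmaI) (auto intro!: finite_PiE)
  also have "\<dots> = (\<Sum>e\<in>{1..I}. e ^ d * card (DS d (I div e)))"
    by (intro sum.cong refl) (simp add: card_cartesian_product card_funcsetE)
  also have "\<dots> \<le> (\<Sum>e\<in>{1..I}. e ^ d * (I div e) ^ d)"
    using Suc.IH by (intro sum_mono mult_left_mono) auto
  also have "\<dots> \<le> (\<Sum>e\<in>{1..I}. I ^ d)"
  proof (intro sum_mono)
    fix e assume "e \<in> {1..I}"
    have "e * (I div e) \<le> I" by simp
    then have "(e * (I div e)) ^ d \<le> I ^ d" by (rule power_mono) simp
    then show "e ^ d * (I div e) ^ d \<le> I ^ d" by (simp add: power_mult_distrib)
  qed
  also have "\<dots> = I ^ Suc d" by simp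
  finally have "card Sig \<le> I ^ Suc d" .
  then show ?case using sub fin by (meson card_image_le finite_imageI finite_subset order_trans card_mono)
qed


(* ---- part 6 ---- *)

primrec btab :: "(nat \<Rightarrow> 'n::finite) \<Rightarrow> (nat \<Rightarrow> nat) \<Rightarrow> (nat \<Rightarrow> nat \<Rightarrow> nat) \<Rightarrow> nat \<Rightarrow> nat \<Rightarrow> real^'n" where
  "btab \<sigma> a k 0 = (\<lambda>_. 0)"
| "btab \<sigma> a k (Suc j) = (btab \<sigma> a k j)(j := (1 / real (a j)) *\<^sub>R
      (axis (\<sigma> j) 1 + (\<Sum>i<j. real (k j i) *\<^sub>R btab \<sigma> a k j i)))"

definition bvec :: "(nat \<Rightarrow> 'n::finite) \<Rightarrow> (nat \<Rightarrow> nat) \<Rightarrow> (nat \<Rightarrow> nat \<Rightarrow> nat) \<Rightarrow> nat \<Rightarrow> real^'n" where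
  "bvec \<sigma> a k j = btab \<sigma> a k (Suc j) j"

lemma btab_stable: "i < j \<Longrightarrow> btab \<sigma> a k j i = bvec \<sigma> a k i"
proof (induction j)
  case 0 then show ?case by simp
next
  case (Suc j)
  show ?case
  proof (cases "i = j")
    case True then show ?thesis by (simp add: bvec_def)
  next
    case False then show ?thesis using Suc by simp
  qed
qed

lemma bvec_eq: "bvec \<sigma> a k j = (1 / real (a j)) *\<^sub>R (axis (\<sigma> j) 1 + (\<Sum>i<j. real (k j i) *\<^sub>R bvec \<sigma> a k i))"
proof -
  have s: "(\<Sum>i<j. real (k j i) *\<^sub>R btab \<sigma> a k j i) = (\<Sum>i<j. real (k j i) *\<^sub>R bvec \<sigma> a k i)"
    by (intro sum.cong refl) (simp add: btab_stable)
  have "bvec \<sigma> a k j = btab \<sigma> a k (Suc j) j" by (rule bvec_def)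
  also have "\<dots> = (1 / real (a j)) *\<^sub>R (axis (\<sigma> j) 1 + (\<Sum>i<j. real (k j i) *\<^sub>R btab \<sigma> a k j i))"
    by simp
  finally show ?thesis unfolding s .
qed

lemma btab_cong: "(\<And>i. i < m \<Longrightarrow> a i = a' i \<and> k i = k' i) \<Longrightarrow> btab \<sigma> a k m = btab \<sigma> a' k' m"
proof (induction m)
  case 0 then show ?case by simp
next
  case (Suc m)
  then have "btab \<sigma> a k m = btab \<sigma> a' k' m" by simp
  then show ?case using Suc.prems[of m] by simp
qed

lemma bvec_cong: "(\<And>i. i \<le> j \<Longrightarrow> a i = a' i \<and> k i = k' i) \<Longrightarrow> bvec \<sigma> a k j = bvec \<sigma> a' k' j"
  unfolding bvec_def by (subst btab_cong[of "Suc j"]) auto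

definition Zspan :: "(nat \<Rightarrow> 'n::finite) \<Rightarrow> (nat \<Rightarrow> nat) \<Rightarrow> (nat \<Rightarrow> nat \<Rightarrow> nat) \<Rightarrow> nat \<Rightarrow> (real^'n) set" where
  "Zspan \<sigma> a k m = {\<Sum>j<m. of_int (t j) *\<^sub>R bvec \<sigma> a k j | t. True}"

lemma group_ofint:
  fixes x :: "'a::real_vector"
  assumes "0 \<in> M" "\<And>x y. x\<in>M \<Longrightarrow> y\<in>M \<Longrightarrow> x+y \<in> M" "\<And>x y. x\<in>M \<Longrightarrow> y\<in>M \<Longrightarrow> x-y \<in> M"
    "x \<in> M"
  shows "of_int n *\<^sub>R x \<in> M"
proof -
  have nat: "of_nat m *\<^sub>R x \<in> M" for m
  proof (induction m)
    case 0 then show ?case using assms(1) by simp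
  next
    case (Suc m)
    have "x + of_nat m *\<^sub>R x \<in> M" using assms(2)[OF assms(4) Suc] .
    then show ?case by (simp add: algebra_simps)
  qed
  show ?thesis
  proof (cases "n \<ge> 0")
    case True then show ?thesis using nat[of "nat n"] by simp
  next
    case False
    have "0 - of_nat (nat (-n)) *\<^sub>R x \<in> M" using assms(1,3) nat by blast
    then show ?thesis using False by simp
  qed
qed

lemma group_sum:
  assumes "0 \<in> M" "\<And>x y. x\<in>M \<Longrightarrow> y\<in>M \<Longrightarrow> x+y \<in> M"
    "\<And>j. j \<in> A \<Longrightarrow> f j \<in> M"
  shows "sum f A \<in> M"
  using assms(3) by (induction A rule: infinite_finite_induct) (use assms(1,2) in auto)


(* ---- part 7 ---- *)

lemma subgroup_R:
  fixes P :: "real set"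
  assumes P0: "0 \<in> P" and Padd: "\<And>p q. p\<in>P \<Longrightarrow> q\<in>P \<Longrightarrow> p+q \<in> P"
    and Pdiff: "\<And>p q. p\<in>P \<Longrightarrow> q\<in>P \<Longrightarrow> p-q \<in> P"
    and P1: "1 \<in> P" and fin: "finite {p\<in>P. 0 < p \<and> p < 1}"
  shows "\<exists>n::nat. n \<ge> 1 \<and> 1 / real n \<in> P \<and> (\<forall>p\<in>P. \<exists>z::int. p = of_int z / real n)"
proof -
  define Q where "Q = {p\<in>P. 0 < p \<and> p \<le> 1}"
  have "Q \<subseteq> insert 1 {p\<in>P. 0 < p \<and> p < 1}" unfolding Q_def by auto
  then have finQ: "finite Q" using fin finite_subset by blast
  have "1 \<in> Q" using P1 unfolding Q_def by simp
  then have neQ: "Q \<noteq> {}" by auto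
  define t where "t = Min Q"
  have tQ: "t \<in> Q" unfolding t_def using finQ neQ by (rule Min_in)
  have tmin: "\<And>q. q \<in> Q \<Longrightarrow> t \<le> q" unfolding t_def using finQ by simp
  have tP: "t \<in> P" and t0: "0 < t" and t1: "t \<le> 1" using tQ unfolding Q_def by auto
  have mult: "of_int z * t \<in> P" for z
    using group_ofint[of P t z] P0 Padd Pdiff tP by simp
  have rep: "p = of_int \<lfloor>p / t\<rfloor> * t" if pP: "p \<in> P" for p
  proof -
    define r where "r = p - of_int \<lfloor>p / t\<rfloor> * t"
    have rP: "r \<in> P" unfolding r_def using Pdiff[OF pP mult] .
    have "of_int \<lfloor>p / t\<rfloor> \<le> p / t" by (rule of_int_floor_le)
    then have "of_int \<lfloor>p / t\<rfloor> * t \<le> p / t * t" using t0 by (intro mult_right_mono) auto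
    then have "of_int \<lfloor>p / t\<rfloor> * t \<le> p" using t0 by simp
    then have r0: "0 \<le> r" unfolding r_def by simp
    have "p / t < of_int \<lfloor>p / t\<rfloor> + 1" by linarith
    then have "p / t * t < (of_int \<lfloor>p / t\<rfloor> + 1) * t" using t0 by (intro mult_strict_right_mono) auto
    then have "p < (of_int \<lfloor>p / t\<rfloor> + 1) * t" using t0 by simp
    then have rt: "r < t" unfolding r_def by (simp add: algebra_simps)
    have "r = 0"
    proof (rule ccontr)
      assume "r \<noteq> 0"
      then have "r \<in> Q" using rP r0 rt t1 unfolding Q_def by auto
      then show False using tmin rt by fastforce
    qed
    then show ?thesis unfolding r_def by simp
  qed
  define z where "z = \<lfloor>1 / t\<rfloor>"
  have z1: "1 = of_int z * t" using rep[OF P1] by (simp add: z_def)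
  have zpos: "z \<ge> 1"
  proof -
    have "1 / t \<ge> 1" using t0 t1 by simp
    then show ?thesis unfolding z_def by linarith
  qed
  define n where "n = nat z"
  have nz: "real n = of_int z" using zpos by (simp add: n_def)
  have "real_of_int z \<noteq> 0" using zpos by simp
  then have tn: "t = 1 / real n" using z1 nz by (simp add: eq_divide_eq mult.commute)
  show ?thesis
  proof (rule exI[of _ n], intro conjI ballI)
    show "n \<ge> 1" using zpos by (simp add: n_def)
    show "1 / real n \<in> P" using tP tn by simp
    fix p assume "p \<in> P"
    then have "p = of_int \<lfloor>p / t\<rfloor> * t" by (rule rep)
    then show "\<exists>z::int. p = of_int z / real n" using tn by (metis times_divide_eq_right mult_1_right)
  qed
qed


(* ---- part 8 ---- *)

definition hinv :: "(nat \<Rightarrow> 'n::finite) \<Rightarrow> (real^'n) set \<Rightarrow> nat \<Rightarrow> (nat \<Rightarrow> nat) \<Rightarrow> (nat \<Rightarrow> nat \<Rightarrow> nat) \<Rightarrow> bool" where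
  "hinv \<sigma> M m a k \<longleftrightarrow> a \<in> {..<m} \<rightarrow>\<^sub>E {1..} \<and> k \<in> PiE {..<m} (\<lambda>j. PiE {..<j} (\<lambda>i. {..<a j})) \<and>
    (\<forall>j<m. bvec \<sigma> a k j \<in> M \<and> (\<forall>l. j < l \<and> l < CARD('n) \<longrightarrow> bvec \<sigma> a k j $ \<sigma> l = 0) \<and>
       bvec \<sigma> a k j $ \<sigma> j = 1 / real (a j)) \<and>
    (\<forall>x\<in>M. (\<forall>l. m \<le> l \<and> l < CARD('n) \<longrightarrow> x $ \<sigma> l = 0) \<longrightarrow> x \<in> Zspan \<sigma> a k m)"

locale hnf =
  fixes \<sigma> :: "nat \<Rightarrow> 'n::finite" and M :: "(real^'n) set"
  assumes sig: "bij_betw \<sigma> {..<CARD('n)} UNIV"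
    and M0: "0 \<in> M" and Madd: "\<And>x y. x\<in>M \<Longrightarrow> y\<in>M \<Longrightarrow> x+y \<in> M"
    and Mdiff: "\<And>x y. x\<in>M \<Longrightarrow> y\<in>M \<Longrightarrow> x-y \<in> M"
    and Mint: "\<And>x. isint x \<Longrightarrow> x \<in> M"
    and Mfin: "finite (vfrac ` M)"
begin

lemma Mofint: "x \<in> M \<Longrightarrow> of_int n *\<^sub>R x \<in> M"
  using group_ofint[of M x n] M0 Madd Mdiff by blast

lemma Msum: "(\<And>j. j\<in>A \<Longrightarrow> f j \<in> M) \<Longrightarrow> sum f A \<in> M"
  using group_sum[of M A f] M0 Madd by blast

lemma sig_inj: "l < CARD('n) \<Longrightarrow> m < CARD('n) \<Longrightarrow> \<sigma> l = \<sigma> m \<Longrightarrow> l = m"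
  using sig unfolding bij_betw_def inj_on_def by blast

lemma sig_surj: "\<exists>l. l < CARD('n) \<and> \<sigma> l = i"
proof -
  have "i \<in> \<sigma> ` {..<CARD('n)}" using sig unfolding bij_betw_def by simp
  then show ?thesis by auto
qed

lemma axis_comp: "l < CARD('n) \<Longrightarrow> m < CARD('n) \<Longrightarrow> (axis (\<sigma> m) 1 :: real^'n) $ \<sigma> l = (if l = m then 1 else 0)"
  using sig_inj by (auto simp: axis_def)

lemma hinv0: "hinv \<sigma> M 0 (\<lambda>_. undefined) (\<lambda>_. undefined)"
  unfolding hinv_def
proof (intro conjI allI impI ballI)
  fix x assume x: "x \<in> M" "\<forall>l. 0 \<le> l \<and> l < CARD('n) \<longrightarrow> x $ \<sigma> l = 0"
  have "x = 0"
  proof (unfold vec_eq_iff, rule allI)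
    fix i
    obtain l where "l < CARD('n)" "\<sigma> l = i" using sig_surj by blast
    then show "x $ i = 0 $ i" using x by auto
  qed
  then show "x \<in> Zspan \<sigma> (\<lambda>_. undefined) (\<lambda>_. undefined) 0" unfolding Zspan_def by auto
qed auto

lemma hstep:
  assumes m: "m < CARD('n)" and H: "hinv \<sigma> M m a k"
  shows "\<exists>a' k'. hinv \<sigma> M (Suc m) a' k'"
proof -
  define d where "d = CARD('n)"
  have md: "m < d" using m d_def by simp
  from H have Ha: "a \<in> {..<m} \<rightarrow>\<^sub>E {1..}"
    and Hk: "k \<in> PiE {..<m} (\<lambda>j. PiE {..<j} (\<lambda>i. {..<a j}))"
    and Hb: "\<And>j. j < m \<Longrightarrow> bvec \<sigma> a k j \<in> M"
    and Hz: "\<And>j l. j < m \<Longrightarrow> j < l \<Longrightarrow> l < d \<Longrightarrow> bvec \<sigma> a k j $ \<sigma> l = 0"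
    and Hd: "\<And>j. j < m \<Longrightarrow> bvec \<sigma> a k j $ \<sigma> j = 1 / real (a j)"
    and Hs: "\<And>x. x \<in> M \<Longrightarrow> (\<forall>l. m \<le> l \<and> l < d \<longrightarrow> x $ \<sigma> l = 0) \<Longrightarrow> x \<in> Zspan \<sigma> a k m"
    unfolding hinv_def d_def by blast+
  define Z where "Z x \<longleftrightarrow> (\<forall>l. Suc m \<le> l \<and> l < d \<longrightarrow> x $ \<sigma> l = 0)" for x :: "real^'n"
  define P where "P = (\<lambda>x. x $ \<sigma> m) ` {x\<in>M. Z x}"
  have P0: "0 \<in> P" unfolding P_def Z_def using M0 by (auto intro!: image_eqI[of _ _ 0])
  have Padd: "p + q \<in> P" if pq: "p \<in> P" "q \<in> P" for p q
  proof -
    obtain x where "x \<in> M" "Z x" "p = x $ \<sigma> m" using pq(1) unfolding P_def by blast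
    moreover obtain y where "y \<in> M" "Z y" "q = y $ \<sigma> m" using pq(2) unfolding P_def by blast
    ultimately have "x + y \<in> {x\<in>M. Z x}" "p + q = (x + y) $ \<sigma> m" unfolding Z_def using Madd by auto
    then show ?thesis unfolding P_def by blast
  qed
  have Pdiff: "p - q \<in> P" if pq: "p \<in> P" "q \<in> P" for p q
  proof -
    obtain x where "x \<in> M" "Z x" "p = x $ \<sigma> m" using pq(1) unfolding P_def by blast
    moreover obtain y where "y \<in> M" "Z y" "q = y $ \<sigma> m" using pq(2) unfolding P_def by blast
    ultimately have "x - y \<in> {x\<in>M. Z x}" "p - q = (x - y) $ \<sigma> m" unfolding Z_def using Mdiff by auto
    then show ?thesis unfolding P_def by blast
  qed
  have axM: "axis (\<sigma> m) 1 \<in> M" using Mint isint_axis by blast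
  have axZ: "Z (axis (\<sigma> m) 1)" unfolding Z_def using axis_comp md d_def by auto
  have P1: "1 \<in> P"
  proof -
    have mem: "axis (\<sigma> m) 1 \<in> {x\<in>M. Z x}" using axM axZ by simp
    have "(1::real) = (\<lambda>x. x $ \<sigma> m) (axis (\<sigma> m) 1 :: real^'n)" by simp
    then show ?thesis unfolding P_def using mem by (rule image_eqI)
  qed
  have Pfin: "finite {p\<in>P. 0 < p \<and> p < 1}"
  proof -
    have "{p\<in>P. 0 < p \<and> p < 1} \<subseteq> (\<lambda>v. v $ \<sigma> m) ` (vfrac ` M)"
    proof
      fix p assume "p \<in> {p\<in>P. 0 < p \<and> p < 1}"
      then obtain x where x: "x \<in> M" "p = x $ \<sigma> m" "0 < p" "p < 1" unfolding P_def by auto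
      have "\<lfloor>x $ \<sigma> m\<rfloor> = 0" using x by (simp add: floor_eq_iff)
      then have "vfrac x $ \<sigma> m = p" using x by (simp add: vfrac_def vfloor_def)
      then show "p \<in> (\<lambda>v. v $ \<sigma> m) ` (vfrac ` M)" using x(1) by (metis image_eqI)
    qed
    then show ?thesis using Mfin finite_subset by blast
  qed
  obtain n :: nat where n1: "n \<ge> 1" and nP: "1 / real n \<in> P" and nall: "\<forall>p\<in>P. \<exists>z::int. p = of_int z / real n"
    using subgroup_R[OF P0 Padd Pdiff P1 Pfin] by blast
  obtain y where yM: "y \<in> M" and yZ: "Z y" and ym: "y $ \<sigma> m = 1 / real n"
    using nP unfolding P_def by auto
  define w where "w = real n *\<^sub>R y - axis (\<sigma> m) 1"
  have wM: "w \<in> M" unfolding w_def using Mdiff[OF Mofint[OF yM, of "int n"] axM] by simp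
  have wz: "\<forall>l. m \<le> l \<and> l < d \<longrightarrow> w $ \<sigma> l = 0"
  proof (intro allI impI)
    fix l assume l: "m \<le> l \<and> l < d"
    show "w $ \<sigma> l = 0"
    proof (cases "l = m")
      case True then show ?thesis using n1 by (simp add: w_def ym)
    next
      case False
      then have "y $ \<sigma> l = 0" using yZ l unfolding Z_def by auto
      then show ?thesis using False l md axis_comp[of l m] d_def by (simp add: w_def)
    qed
  qed
  obtain c :: "nat \<Rightarrow> int" where c: "w = (\<Sum>j<m. of_int (c j) *\<^sub>R bvec \<sigma> a k j)"
    using Hs[OF wM wz] unfolding Zspan_def by blast
  define kk where "kk = restrict (\<lambda>i. nat (c i mod int n)) {..<m}"
  define a' where "a' = a(m := n)"
  define k' where "k' = k(m := kk)"
  have a'm: "a' m = n" by (simp add: a'_def)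
  have bv: "bvec \<sigma> a' k' j = bvec \<sigma> a k j" if "j < m" for j
    using that by (intro bvec_cong) (simp add: a'_def k'_def)
  define q where "q i = c i div int n" for i
  have cdec: "of_int (c i) = real n * of_int (q i) + real (kk i)" if "i < m" for i
  proof -
    have "c i = int n * q i + c i mod int n" unfolding q_def by simp
    moreover have "c i mod int n \<ge> 0" using n1 by simp
    ultimately show ?thesis using that by (simp add: kk_def) (metis of_int_add of_int_mult of_int_of_nat_eq)
  qed
  have sumdec: "(\<Sum>j<m. of_int (c j) *\<^sub>R bvec \<sigma> a k j) =
      real n *\<^sub>R (\<Sum>j<m. of_int (q j) *\<^sub>R bvec \<sigma> a k j) + (\<Sum>j<m. real (kk j) *\<^sub>R bvec \<sigma> a k j)"
  proof -
    have "(\<Sum>j<m. of_int (c j) *\<^sub>R bvec \<sigma> a k j) =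
       (\<Sum>j<m. real n *\<^sub>R (of_int (q j) *\<^sub>R bvec \<sigma> a k j) + real (kk j) *\<^sub>R bvec \<sigma> a k j)"
      by (intro sum.cong refl) (simp add: cdec scaleR_add_left)
    then show ?thesis by (simp add: sum.distrib scaleR_sum_right)
  qed
  have bm: "bvec \<sigma> a' k' m = y - (\<Sum>j<m. of_int (q j) *\<^sub>R bvec \<sigma> a k j)"
  proof -
    have s1: "(\<Sum>i<m. real (k' m i) *\<^sub>R bvec \<sigma> a' k' i) = (\<Sum>i<m. real (kk i) *\<^sub>R bvec \<sigma> a k i)"
    proof (intro sum.cong refl)
      fix i assume "i \<in> {..<m}"
      then show "real (k' m i) *\<^sub>R bvec \<sigma> a' k' i = real (kk i) *\<^sub>R bvec \<sigma> a k i"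
        using bv[of i] by (simp add: k'_def)
    qed
    have "bvec \<sigma> a' k' m = (1 / real n) *\<^sub>R (axis (\<sigma> m) 1 + (\<Sum>i<m. real (kk i) *\<^sub>R bvec \<sigma> a k i))"
      by (subst bvec_eq) (simp add: s1 a'm)
    also have "axis (\<sigma> m) 1 + (\<Sum>i<m. real (kk i) *\<^sub>R bvec \<sigma> a k i) =
        real n *\<^sub>R (y - (\<Sum>j<m. of_int (q j) *\<^sub>R bvec \<sigma> a k j))"
      using c sumdec unfolding w_def by (simp add: algebra_simps)
    finally show ?thesis using n1 by simp
  qed
  have bmM: "bvec \<sigma> a' k' m \<in> M"
    unfolding bm by (intro Mdiff yM Msum Mofint Hb) auto
  have comp_sum: "(\<Sum>j<m. of_int (q j) *\<^sub>R bvec \<sigma> a k j) $ \<sigma> l = 0" if "m \<le> l" "l < d" for l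
    using that Hz by (simp add: sum_component)
  have bmz: "bvec \<sigma> a' k' m $ \<sigma> l = 0" if "m < l" "l < d" for l
    using that yZ comp_sum[of l] unfolding bm Z_def by simp
  have bmd: "bvec \<sigma> a' k' m $ \<sigma> m = 1 / real (a' m)"
    using comp_sum[of m] md ym unfolding bm by (simp add: a'_def)
  have a'P: "a' \<in> {..<Suc m} \<rightarrow>\<^sub>E {1..}"
    unfolding a'_def lessThan_Suc using n1 by (intro PiE_fun_upd Ha) simp
  have k'P: "k' \<in> PiE {..<Suc m} (\<lambda>j. PiE {..<j} (\<lambda>i. {..<a' j}))"
  proof -
    have e: "PiE {..<m} (\<lambda>j. PiE {..<j} (\<lambda>i. {..<a' j})) = PiE {..<m} (\<lambda>j. PiE {..<j} (\<lambda>i. {..<a j}))"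
      by (intro PiE_cong) (simp add: a'_def)
    have kkP: "kk \<in> PiE {..<m} (\<lambda>i. {..<a' m})"
      unfolding kk_def a'_def using n1 by (intro restrict_PiE_iff[THEN iffD2]) (simp add: nat_less_iff)
    show ?thesis unfolding k'_def lessThan_Suc
      by (intro PiE_fun_upd kkP) (simp add: e Hk)
  qed
  have span: "x \<in> Zspan \<sigma> a' k' (Suc m)" if xM: "x \<in> M" and xz: "\<forall>l. Suc m \<le> l \<and> l < d \<longrightarrow> x $ \<sigma> l = 0" for x
  proof -
    have "x $ \<sigma> m \<in> P" unfolding P_def Z_def using xM xz by auto
    then obtain z :: int where z: "x $ \<sigma> m = of_int z / real n" using nall by blast
    define x' where "x' = x - of_int z *\<^sub>R bvec \<sigma> a' k' m"
    have x'M: "x' \<in> M" unfolding x'_def using Mdiff[OF xM Mofint[OF bmM]] .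
    have x'z: "\<forall>l. m \<le> l \<and> l < d \<longrightarrow> x' $ \<sigma> l = 0"
    proof (intro allI impI)
      fix l assume l: "m \<le> l \<and> l < d"
      show "x' $ \<sigma> l = 0"
      proof (cases "l = m")
        case True then show ?thesis using z bmd by (simp add: x'_def a'_def)
      next
        case False then show ?thesis using l xz bmz[of l] by (simp add: x'_def)
      qed
    qed
    obtain t where t: "x' = (\<Sum>j<m. of_int (t j) *\<^sub>R bvec \<sigma> a k j)"
      using Hs[OF x'M x'z] unfolding Zspan_def by blast
    define t' where "t' = t(m := z)"
    have "x = (\<Sum>j<m. of_int (t j) *\<^sub>R bvec \<sigma> a k j) + of_int z *\<^sub>R bvec \<sigma> a' k' m"
      using t unfolding x'_def by (simp add: algebra_simps)
    also have "(\<Sum>j<m. of_int (t j) *\<^sub>R bvec \<sigma> a k j) = (\<Sum>j<m. of_int (t' j) *\<^sub>R bvec \<sigma> a' k' j)"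
      by (intro sum.cong refl) (simp add: t'_def bv)
    also have "\<dots> + of_int z *\<^sub>R bvec \<sigma> a' k' m = (\<Sum>j<Suc m. of_int (t' j) *\<^sub>R bvec \<sigma> a' k' j)"
      by (simp add: t'_def)
    finally show ?thesis unfolding Zspan_def by blast
  qed
  have "hinv \<sigma> M (Suc m) a' k'"
    unfolding hinv_def
  proof (intro conjI allI impI ballI)
    show "a' \<in> {..<Suc m} \<rightarrow>\<^sub>E {1..}" by (rule a'P)
    show "k' \<in> PiE {..<Suc m} (\<lambda>j. PiE {..<j} (\<lambda>i. {..<a' j}))" by (rule k'P)
    fix j assume j: "j < Suc m"
    show "bvec \<sigma> a' k' j \<in> M"
      using j bmM Hb bv by (cases "j = m") auto
    show "bvec \<sigma> a' k' j $ \<sigma> j = 1 / real (a' j)"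
      using j bmd Hd bv by (cases "j = m") (auto simp: a'_def)
    fix l assume l: "j < l \<and> l < CARD('n)"
    show "bvec \<sigma> a' k' j $ \<sigma> l = 0"
      using j l bmz Hz bv d_def by (cases "j = m") auto
  next
    fix x assume "x \<in> M" "\<forall>l. Suc m \<le> l \<and> l < CARD('n) \<longrightarrow> x $ \<sigma> l = 0"
    then show "x \<in> Zspan \<sigma> a' k' (Suc m)" using span d_def by blast
  qed
  then show ?thesis by blast
qed

end


(* ---- part 9 ---- *)

context hnf begin

lemma hinv_all: "m \<le> CARD('n) \<Longrightarrow> \<exists>a k. hinv \<sigma> M m a k"
proof (induction m)
  case 0 then show ?case using hinv0 by blast
next
  case (Suc m)
  then obtain a k where "hinv \<sigma> M m a k" by auto
  then show ?case using hstep[of m a k] Suc.prems by simp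
qed

lemma not_int_frac:
  fixes s :: int and a :: nat
  assumes "s \<noteq> 0" "\<bar>s\<bar> < int a"
  shows "of_int s / real a \<notin> \<int>"
proof
  assume "of_int s / real a \<in> \<int>"
  then obtain z where z: "of_int s / real a = of_int z" by (auto elim: Ints_cases)
  have a0: "real a > 0" using assms by simp
  then have "of_int s = of_int z * real a" using z by (simp add: divide_eq_eq)
  then have sz: "s = z * int a" by (metis of_int_eq_iff of_int_mult of_int_of_nat_eq)
  then have "z \<noteq> 0" using assms(1) by auto
  then have "\<bar>z\<bar> * int a \<ge> int a" using a0 by (simp add: mult_le_cancel_right1)
  then show False using assms(2) sz by (simp add: abs_mult)
qed

lemma hnf_result:
  assumes cI: "card (vfrac ` M) \<le> I"
  shows "\<exists>a k. (a,k) \<in> DS (CARD('n)) I \<and> M = Zspan \<sigma> a k (CARD('n))"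
proof -
  define d where "d = CARD('n)"
  obtain a k where H: "hinv \<sigma> M d a k" using hinv_all d_def by blast
  from H have Ha: "a \<in> {..<d} \<rightarrow>\<^sub>E {1..}"
    and Hk: "k \<in> PiE {..<d} (\<lambda>j. PiE {..<j} (\<lambda>i. {..<a j}))"
    and Hb: "\<And>j. j < d \<Longrightarrow> bvec \<sigma> a k j \<in> M"
    and Hz: "\<And>j l. j < d \<Longrightarrow> j < l \<Longrightarrow> l < d \<Longrightarrow> bvec \<sigma> a k j $ \<sigma> l = 0"
    and Hd: "\<And>j. j < d \<Longrightarrow> bvec \<sigma> a k j $ \<sigma> j = 1 / real (a j)"
    and Hs: "\<And>x. x \<in> M \<Longrightarrow> x \<in> Zspan \<sigma> a k d"
    unfolding hinv_def d_def by auto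
  have eqM: "M = Zspan \<sigma> a k d"
  proof
    show "M \<subseteq> Zspan \<sigma> a k d" using Hs by blast
    show "Zspan \<sigma> a k d \<subseteq> M"
      unfolding Zspan_def by (auto intro!: Msum Mofint Hb)
  qed
  define T where "T = PiE {..<d} (\<lambda>j. {..<a j})"
  define \<phi> where "\<phi> t = vfrac (\<Sum>j<d. real (t j) *\<^sub>R bvec \<sigma> a k j)" for t
  have \<phi>M: "\<phi> ` T \<subseteq> vfrac ` M"
  proof
    fix u assume "u \<in> \<phi> ` T"
    then obtain t where "u = \<phi> t" by auto
    moreover have "(\<Sum>j<d. real (t j) *\<^sub>R bvec \<sigma> a k j) \<in> M"
      using Mofint[OF Hb, of _ "int (t _)"] by (intro Msum) simp
    ultimately show "u \<in> vfrac ` M" unfolding \<phi>_def by blast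
  qed
  have inj: "inj_on \<phi> T"
  proof (rule inj_onI, rule ccontr)
    fix t t' assume tT: "t \<in> T" "t' \<in> T" and eq: "\<phi> t = \<phi> t'" and ne: "t \<noteq> t'"
    have "\<exists>j. t j \<noteq> t' j" using ne by auto
    then obtain j1 where j1: "t j1 \<noteq> t' j1" by blast
    have j1d: "j1 < d"
    proof (rule ccontr)
      assume "\<not> j1 < d"
      then have "t j1 = undefined" "t' j1 = undefined" using tT unfolding T_def by (auto intro: PiE_arb)
      then show False using j1 by simp
    qed
    define J where "J = {j. j < d \<and> t j \<noteq> t' j}"
    have finJ: "finite J" unfolding J_def by simp
    have neJ: "J \<noteq> {}" using j1 j1d unfolding J_def by auto
    define j0 where "j0 = Max J"
    have j0J: "j0 \<in> J" unfolding j0_def using finJ neJ by (rule Max_in)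
    have j0d: "j0 < d" and tj0: "t j0 \<noteq> t' j0" using j0J unfolding J_def by auto
    have above: "t j = t' j" if "j0 < j" "j < d" for j
    proof (rule ccontr)
      assume "t j \<noteq> t' j"
      then have "j \<in> J" using that unfolding J_def by simp
      then have "j \<le> j0" unfolding j0_def using finJ by simp
      then show False using that by simp
    qed
    define s where "s j = int (t j) - int (t' j)" for j
    have "isint ((\<Sum>j<d. real (t j) *\<^sub>R bvec \<sigma> a k j) - (\<Sum>j<d. real (t' j) *\<^sub>R bvec \<sigma> a k j))"
      using eq unfolding \<phi>_def by (simp add: vfrac_eq_iff)
    also have "(\<Sum>j<d. real (t j) *\<^sub>R bvec \<sigma> a k j) - (\<Sum>j<d. real (t' j) *\<^sub>R bvec \<sigma> a k j)
        = (\<Sum>j<d. of_int (s j) *\<^sub>R bvec \<sigma> a k j)"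
      by (simp add: s_def sum_subtractf[symmetric] scaleR_diff_left)
    finally have isi: "isint (\<Sum>j<d. of_int (s j) *\<^sub>R bvec \<sigma> a k j)" .
    have comp: "(\<Sum>j<d. of_int (s j) *\<^sub>R bvec \<sigma> a k j) $ \<sigma> j0 = of_int (s j0) / real (a j0)"
    proof -
      have "(\<Sum>j<d. of_int (s j) *\<^sub>R bvec \<sigma> a k j) $ \<sigma> j0 = (\<Sum>j<d. of_int (s j) * bvec \<sigma> a k j $ \<sigma> j0)"
        by (simp add: sum_component)
      also have "\<dots> = of_int (s j0) * bvec \<sigma> a k j0 $ \<sigma> j0 + (\<Sum>j\<in>{..<d} - {j0}. of_int (s j) * bvec \<sigma> a k j $ \<sigma> j0)"
        using j0d by (simp add: sum.remove)
      also have "(\<Sum>j\<in>{..<d} - {j0}. of_int (s j) * bvec \<sigma> a k j $ \<sigma> j0) = 0"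
      proof (intro sum.neutral ballI)
        fix j assume j: "j \<in> {..<d} - {j0}"
        show "of_int (s j) * bvec \<sigma> a k j $ \<sigma> j0 = 0"
        proof (cases "j < j0")
          case True then show ?thesis using Hz[of j j0] j j0d by simp
        next
          case False then have "j0 < j" using j by simp
          then show ?thesis using above[of j] j by (simp add: s_def)
        qed
      qed
      finally show ?thesis using Hd[OF j0d] by simp
    qed
    have sne: "s j0 \<noteq> 0" using tj0 by (simp add: s_def)
    have "t j0 < a j0" "t' j0 < a j0" using tT j0d unfolding T_def by (auto dest: PiE_mem)
    then have slt: "\<bar>s j0\<bar> < int (a j0)" by (simp add: s_def)
    have "(\<Sum>j<d. of_int (s j) *\<^sub>R bvec \<sigma> a k j) $ \<sigma> j0 \<in> \<int>" using isi by (simp add: isint_def)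
    then show False using comp not_int_frac[OF sne slt] by simp
  qed
  have cT: "card T = prod a {..<d}" unfolding T_def by (simp add: card_PiE)
  have "card T = card (\<phi> ` T)" using inj by (simp add: card_image)
  also have "\<dots> \<le> card (vfrac ` M)" using \<phi>M Mfin by (rule card_mono[rotated])
  finally have "prod a {..<d} \<le> I" using cT cI by simp
  then have "(a,k) \<in> DS d I" using Ha Hk by (simp add: DS_def)
  then show ?thesis using eqM d_def by blast
qed

end


(* ---- part 10 ---- *)

definition Sym :: "(real^'n^'n::finite) set" where "Sym = {M. transpose M = M}"

lemma inner_outer: "inner (outer_sq u) (outer_sq v) = (u \<bullet> v)^2"
proof -
  have "inner (outer_sq u) (outer_sq v) = (\<Sum>i\<in>UNIV. \<Sum>j\<in>UNIV. (u$i * v$i) * (u$j * v$j))"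
    unfolding outer_sq_def inner_vec_def by (simp add: inner_real_def algebra_simps)
  also have "\<dots> = (\<Sum>i\<in>UNIV. u$i * v$i) * (\<Sum>j\<in>UNIV. u$j * v$j)" by (simp add: sum_product)
  finally show ?thesis by (simp add: inner_vec_def inner_real_def power2_eq_square)
qed

lemma inner_outer_quad: "inner (outer_sq u) G = u \<bullet> (G *v u)"
  unfolding outer_sq_def inner_vec_def matrix_vector_mult_def
  by (simp add: inner_real_def sum_distrib_left algebra_simps)

lemma quad_TT:
  fixes T :: "real^'n^'n::finite" and u :: "real^'n"
  shows "u \<bullet> ((transpose T ** T) *v u) = (T *v u) \<bullet> (T *v u)"
proof -
  have "u \<bullet> ((transpose T ** T) *v u) = u \<bullet> (transpose T *v (T *v u))"
    by (simp add: matrix_vector_mul_assoc)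
  also have "\<dots> = (\<Sum>i\<in>UNIV. \<Sum>r\<in>UNIV. u$i * (T$r$i * (T *v u)$r))"
    by (simp add: inner_vec_def inner_real_def matrix_vector_mult_def transpose_def sum_distrib_left)
  also have "\<dots> = (\<Sum>r\<in>UNIV. \<Sum>i\<in>UNIV. u$i * (T$r$i * (T *v u)$r))" by (rule sum.swap)
  also have "\<dots> = (T *v u) \<bullet> (T *v u)"
    by (simp add: inner_vec_def inner_real_def matrix_vector_mult_def sum_distrib_right algebra_simps)
  finally show ?thesis .
qed

lemma quad_one: "u \<bullet> (mat 1 *v u) = u \<bullet> u" by simp

lemma outer_Sym: "outer_sq u \<in> Sym"
  by (simp add: Sym_def outer_sq_def transpose_def vec_eq_iff mult.commute)

lemma subspace_Sym: "subspace (Sym :: (real^'n^'n::finite) set)"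
  unfolding subspace_def Sym_def by (simp add: transpose_def vec_eq_iff)

lemma span_Sym: "S \<subseteq> Sym \<Longrightarrow> span S \<subseteq> Sym"
  using span_minimal subspace_Sym by blast

lemma outer_eq0: "outer_sq u = 0 \<Longrightarrow> u = 0"
proof -
  assume "outer_sq u = 0"
  then have "inner (outer_sq u) (outer_sq u) = 0" by simp
  then have "(u \<bullet> u)^2 = 0" by (simp add: inner_outer)
  then show "u = 0" by simp
qed

lemma perfect_wr:
  assumes "perfect L"
  shows "span (min_vecs L) = (UNIV :: (real^'n::finite) set)"
proof (rule ccontr)
  assume ne: "span (min_vecs L) \<noteq> UNIV"
  have "dim (min_vecs L) < DIM(real^'n)"
  proof (rule ccontr)
    assume "\<not> dim (min_vecs L) < DIM(real^'n)"
    then have "dim (min_vecs L) \<ge> DIM(real^'n)" by simp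
    then have "span (min_vecs L) = UNIV" by (metis dim_eq_full dim_subset_UNIV le_antisym)
    then show False using ne by simp
  qed
  then obtain u :: "real^'n" where u: "u \<noteq> 0" "\<And>y. y \<in> span (min_vecs L) \<Longrightarrow> orthogonal u y"
    using orthogonal_to_subspace_exists[OF \<open>dim (min_vecs L) < DIM(real^'n)\<close>] by blast
  have "outer_sq u \<in> span (outer_sq ` min_vecs L)"
    using assms outer_Sym unfolding perfect_def Sym_def by auto
  moreover have "orthogonal (outer_sq u) y" if yy: "y \<in> outer_sq ` min_vecs L" for y
  proof -
    obtain v where v: "v \<in> min_vecs L" "y = outer_sq v" using yy by auto
    have "u \<bullet> v = 0" using u(2)[of v] v(1) span_base unfolding orthogonal_def by blast
    then show ?thesis using v by (simp add: orthogonal_def inner_outer)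
  qed
  ultimately have "orthogonal (outer_sq u) (outer_sq u)" using orthogonal_to_span by blast
  then have "outer_sq u = 0" by (simp add: orthogonal_def)
  then show False using u(1) outer_eq0 by blast
qed


(* ---- part 11 ---- *)

definition Ssets :: "'n::finite set set" where "Ssets = {A. card A = 1 \<or> card A = 2}"
definition Emat :: "'n::finite set \<Rightarrow> real^'n^'n" where "Emat A = (\<chi> i j. if {i,j} = A then 1 else 0)"

lemma card_Ssets: "card (Ssets :: 'n::finite set set) = CARD('n) + (CARD('n) choose 2)"
proof -
  define X where "X = {A::'n set. A \<subseteq> UNIV \<and> card A = 1}"
  define Y where "Y = {A::'n set. A \<subseteq> UNIV \<and> card A = 2}"
  have e: "(Ssets :: 'n set set) = X \<union> Y" unfolding Ssets_def X_def Y_def by auto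
  have cX: "card X = CARD('n)" unfolding X_def using n_subsets[of "UNIV::'n set" 1] by simp
  have cY: "card Y = CARD('n) choose 2" unfolding Y_def using n_subsets[of "UNIV::'n set" 2] by simp
  have "card (X \<union> Y) = card X + card Y" by (rule card_Un_disjoint) (auto simp: X_def Y_def)
  then show ?thesis using e cX cY by simp
qed

lemma finite_Ssets: "finite (Ssets :: 'n::finite set set)" by simp

lemma Ssets_pair: "{i,j} \<in> (Ssets :: 'n::finite set set)"
  unfolding Ssets_def by (cases "i = j") auto

lemma Ssets_ex: "A \<in> (Ssets :: 'n::finite set set) \<Longrightarrow> \<exists>i j. A = {i,j}"
proof -
  assume "A \<in> Ssets"
  then have "card A = 1 \<or> card A = 2" unfolding Ssets_def by simp
  then show ?thesis
  proof
    assume "card A = 1"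
    then have "\<exists>i. A = {i}" by (simp add: card_1_singleton_iff)
    then obtain i where "A = {i}" by blast
    then have "A = {i,i}" by simp
    then show ?thesis by blast
  next
    assume "card A = 2"
    then have "\<exists>i j. A = {i,j} \<and> i \<noteq> j" by (simp add: card_2_iff)
    then obtain i j where "A = {i,j}" by blast
    then show ?thesis by blast
  qed
qed

lemma Emat_Sym: "Emat A \<in> Sym"
proof -
  have c: "{j,i} = {i,j}" for i j :: 'a by blast
  show ?thesis unfolding Sym_def
    by (simp add: vec_eq_iff transpose_def Emat_def c)
qed

lemma Sym_span_E: "Sym \<subseteq> span (Emat ` (Ssets :: 'n::finite set set))"
proof
  fix G :: "real^'n^'n" assume G: "G \<in> Sym"
  have sym: "G $ j $ i = G $ i $ j" for i j
  proof -
    have "(transpose G) $ i $ j = G $ j $ i" by (simp add: transpose_def)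
    then show ?thesis using G unfolding Sym_def by simp
  qed
  define pick where "pick A = (SOME p. {fst p, snd p} = A)" for A :: "'n set"
  define c where "c A = G $ fst (pick A) $ snd (pick A)" for A
  have cij: "c {i,j} = G $ i $ j" for i j
  proof -
    have "\<exists>p. {fst p, snd p} = {i,j}" by (intro exI[of _ "(i,j)"]) simp
    then have "{fst (pick {i,j}), snd (pick {i,j})} = {i,j}" unfolding pick_def by (rule someI_ex)
    then have "(fst (pick {i,j}) = i \<and> snd (pick {i,j}) = j) \<or> (fst (pick {i,j}) = j \<and> snd (pick {i,j}) = i)"
      by (simp add: doubleton_eq_iff)
    then show ?thesis unfolding c_def using sym by auto
  qed
  have "G = (\<Sum>A\<in>Ssets. c A *\<^sub>R Emat A)"
  proof (unfold vec_eq_iff, intro allI)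
    fix i j
    have "(\<Sum>A\<in>Ssets. c A *\<^sub>R Emat A) $ i $ j = (\<Sum>A\<in>Ssets. c A * (if {i,j} = A then 1 else 0))"
      by (simp add: sum_component Emat_def)
    also have "\<dots> = (\<Sum>A\<in>Ssets. (if {i,j} = A then c A else 0))"
      by (intro sum.cong refl) simp
    also have "\<dots> = c {i,j}" using Ssets_pair[of i j] by (simp add: sum.delta)
    finally show "G $ i $ j = (\<Sum>A\<in>Ssets. c A *\<^sub>R Emat A) $ i $ j" by (simp add: cij)
  qed
  also have "\<dots> \<in> span (Emat ` Ssets)"
    by (intro span_sum span_scale span_base) auto
  finally show "G \<in> span (Emat ` Ssets)" .
qed

lemma Emat_pair: "Emat {i,j} $ i $ j = 1" by (simp add: Emat_def)

lemma Emat_inj: "inj_on Emat (Ssets :: 'n::finite set set)"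
proof (rule inj_onI)
  fix A B :: "'n set" assume A: "A \<in> Ssets" and "B \<in> Ssets" and eq: "Emat A = Emat B"
  obtain i j where ij: "A = {i,j}" using Ssets_ex[OF A] by blast
  have "Emat B $ i $ j = 1" using eq ij Emat_pair by metis
  then have "{i,j} = B" unfolding Emat_def by (simp split: if_splits)
  then show "A = B" using ij by simp
qed

lemma Emat_indep: "independent (Emat ` (Ssets :: 'n::finite set set))"
proof (rule pairwise_orthogonal_independent)
  show "pairwise orthogonal (Emat ` (Ssets :: 'n set set))"
  proof (unfold pairwise_def, intro ballI impI)
    fix X Y assume "X \<in> Emat ` (Ssets :: 'n set set)" "Y \<in> Emat ` (Ssets :: 'n set set)" "X \<noteq> Y"
    then obtain A B where AB: "X = Emat A" "Y = Emat B" "A \<noteq> B" by auto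
    have "X \<bullet> Y = (\<Sum>i\<in>UNIV. \<Sum>j\<in>UNIV. (if {i,j} = A then 1 else 0) * (if {i,j} = B then 1 else 0))"
      unfolding AB Emat_def inner_vec_def by (simp add: inner_real_def)
    also have "\<dots> = 0" using AB(3) by (intro sum.neutral ballI) auto
    finally show "orthogonal X Y" by (simp add: orthogonal_def)
  qed
  show "0 \<notin> Emat ` (Ssets :: 'n set set)"
  proof
    assume "0 \<in> Emat ` (Ssets :: 'n set set)"
    then obtain A :: "'n set" where A: "A \<in> Ssets" "Emat A = 0" by auto
    obtain i j where "A = {i,j}" using Ssets_ex[OF A(1)] by blast
    then show False using A(2) Emat_pair[of i j] by simp
  qed
qed

lemma card_E: "card (Emat ` (Ssets :: 'n::finite set set)) = CARD('n) + (CARD('n) choose 2)"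
  using card_image[OF Emat_inj[where 'n='n]] card_Ssets[where 'n='n] by simp

lemma Sym_indep_bound:
  assumes "independent S" "S \<subseteq> (Sym :: (real^'n^'n::finite) set)"
  shows "finite S \<and> card S \<le> CARD('n) + (CARD('n) choose 2)"
  using independent_span_bound[of "Emat ` (Ssets :: 'n set set)" S] assms Sym_span_E card_E[where 'n='n] by auto

lemma Sym_span_lower:
  assumes "finite T" "(Sym :: (real^'n^'n::finite) set) \<subseteq> span T"
  shows "CARD('n) + (CARD('n) choose 2) \<le> card T"
proof -
  have "Emat ` (Ssets :: 'n set set) \<subseteq> span T" using Emat_Sym assms(2) by auto
  then show ?thesis using independent_span_bound[OF assms(1) Emat_indep] card_E[where 'n='n] by simp
qed


(* ---- part 12 ---- *)

lemma dual_rows: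
  fixes f :: "'n::finite \<Rightarrow> real^'n"
  assumes V: "invertible (cols f)"
  shows "(matrix_inv (cols f) $ j) \<bullet> f i = (if j = i then 1 else 0)"
proof -
  have "(matrix_inv (cols f) ** cols f) $ j $ i = (matrix_inv (cols f) $ j) \<bullet> f i"
    by (simp add: matrix_matrix_mult_def cols_def inner_vec_def inner_real_def mult.commute)
  then show ?thesis using matrix_inv_left[OF V] by (simp add: mat_def)
qed

lemma outer_cols_indep:
  fixes f :: "'n::finite \<Rightarrow> real^'n"
  assumes V: "invertible (cols f)"
  shows "independent (outer_sq ` range f) \<and> card (outer_sq ` range f) = CARD('n)"
proof -
  define u where "u j = matrix_inv (cols f) $ j" for j
  have du: "inner (outer_sq (u j)) (outer_sq (f i)) = (if j = i then 1 else 0)" for i j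
    using dual_rows[OF V, of j i] by (simp add: inner_outer u_def)
  have inj: "inj (\<lambda>i. outer_sq (f i))"
  proof (rule injI)
    fix i i' assume "outer_sq (f i) = outer_sq (f i')"
    then have "inner (outer_sq (u i)) (outer_sq (f i)) = inner (outer_sq (u i)) (outer_sq (f i'))" by simp
    then show "i = i'" using du[of i i] du[of i i'] by (simp split: if_splits)
  qed
  have img: "outer_sq ` range f = (\<lambda>i. outer_sq (f i)) ` UNIV" by auto
  have card: "card (outer_sq ` range f) = CARD('n)" unfolding img using inj by (simp add: card_image)
  have ind: "independent (outer_sq ` range f)"
  proof (rule independent_if_scalars_zero)
    show "finite (outer_sq ` range f)" by simp
    fix g X assume sum0: "(\<Sum>X\<in>outer_sq ` range f. g X *\<^sub>R X) = 0" and X: "X \<in> outer_sq ` range f"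
    then obtain i where Xi: "X = outer_sq (f i)" by auto
    have "0 = inner (outer_sq (u i)) (\<Sum>X\<in>outer_sq ` range f. g X *\<^sub>R X)" using sum0 by simp
    also have "\<dots> = (\<Sum>X\<in>outer_sq ` range f. g X * inner (outer_sq (u i)) X)"
      by (simp add: inner_sum_right)
    also have "\<dots> = (\<Sum>j\<in>UNIV. g (outer_sq (f j)) * inner (outer_sq (u i)) (outer_sq (f j)))"
      unfolding img by (subst sum.reindex[OF inj]) simp
    also have "\<dots> = (\<Sum>j\<in>UNIV. if i = j then g (outer_sq (f j)) else 0)"
      by (intro sum.cong refl) (simp add: du)
    also have "\<dots> = g X" by (simp add: Xi)
    finally show "g X = 0" by simp
  qed
  show ?thesis using ind card by simp
qed

lemma choose_X:
  fixes L :: "(real^'n::finite) set" and f :: "'n \<Rightarrow> real^'n"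
  assumes perf: "perfect L" and fin: "finite (min_vecs L)"
    and fm: "\<And>i. f i \<in> min_vecs L" and V: "invertible (cols f)"
  shows "\<exists>X. X \<subseteq> min_vecs L \<and> card X = (CARD('n) choose 2) \<and> Sym \<subseteq> span (outer_sq ` (range f \<union> X))"
proof -
  define K where "K = CARD('n) choose 2"
  define S0 where "S0 = outer_sq ` range f"
  define W where "W = outer_sq ` min_vecs L"
  have spW: "span W = Sym" using perf unfolding perfect_def W_def Sym_def by simp
  have S0W: "S0 \<subseteq> W" unfolding S0_def W_def using fm by auto
  have S0i: "independent S0" and cS0: "card S0 = CARD('n)" using outer_cols_indep[OF V] unfolding S0_def by auto
  obtain B where B: "S0 \<subseteq> B" "B \<subseteq> W" "independent B" "W \<subseteq> span B"
    using maximal_independent_subset_extend[OF S0W S0i] by blast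
  have BSym: "B \<subseteq> Sym" using B(2) spW span_superset by blast
  have finB: "finite B" and cB: "card B \<le> CARD('n) + K" using Sym_indep_bound[OF B(3) BSym] K_def by auto
  define B' where "B' = B - S0"
  have finS0: "finite S0" unfolding S0_def by simp
  have cB': "card B' \<le> K"
  proof -
    have "card B' = card B - card S0" unfolding B'_def using B(1) finS0 by (simp add: card_Diff_subset)
    then show ?thesis using cB cS0 by simp
  qed
  define pre where "pre Y = (SOME v. v \<in> min_vecs L \<and> outer_sq v = Y)" for Y
  have pre: "pre Y \<in> min_vecs L \<and> outer_sq (pre Y) = Y" if "Y \<in> W" for Y
  proof -
    have "\<exists>v. v \<in> min_vecs L \<and> outer_sq v = Y" using that unfolding W_def by auto
    then show ?thesis unfolding pre_def by (rule someI_ex)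
  qed
  define X0 where "X0 = pre ` B'"
  have X0m: "X0 \<subseteq> min_vecs L" unfolding X0_def B'_def using pre B(2) by auto
  have finB': "finite B'" unfolding B'_def using finB by simp
  have cX0: "card X0 \<le> K" unfolding X0_def using card_image_le[OF finB', of pre] cB' by simp
  have oX0: "outer_sq ` X0 = B'"
  proof -
    have "outer_sq ` X0 = (\<lambda>Y. outer_sq (pre Y)) ` B'" unfolding X0_def by (simp add: image_image)
    also have "\<dots> = (\<lambda>Y. Y) ` B'"
    proof (rule image_cong[OF refl])
      fix Y assume "Y \<in> B'"
      then have "Y \<in> W" using B(2) unfolding B'_def by auto
      then show "outer_sq (pre Y) = Y" using pre by blast
    qed
    also have "\<dots> = B'" by simp
    finally show ?thesis .
  qed
  have spX0: "Sym \<subseteq> span (outer_sq ` (range f \<union> X0))"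
  proof -
    have "outer_sq ` (range f \<union> X0) = S0 \<union> B'" unfolding S0_def by (simp add: image_Un oX0)
    also have "S0 \<union> B' = B" unfolding B'_def using B(1) by auto
    finally have e: "outer_sq ` (range f \<union> X0) = B" .
    have "span W \<subseteq> span B" using B(4) span_minimal subspace_span by blast
    then show ?thesis unfolding e using spW by simp
  qed
  have cW: "CARD('n) + K \<le> card W"
    using Sym_span_lower[of W] spW fin unfolding W_def K_def by simp
  have "card W \<le> card (min_vecs L)" unfolding W_def using fin by (rule card_image_le)
  then have cm: "K \<le> card (min_vecs L)" using cW by simp
  have "K - card X0 \<le> card (min_vecs L - X0)"
    using cm X0m fin by (simp add: card_Diff_subset finite_subset)
  then obtain Y where Y: "Y \<subseteq> min_vecs L - X0" "card Y = K - card X0" "finite Y"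
    by (rule obtain_subset_with_card_n)
  define X where "X = X0 \<union> Y"
  have finX0: "finite X0" using X0m fin finite_subset by blast
  have "card X = card X0 + card Y" unfolding X_def using Y finX0 by (intro card_Un_disjoint) auto
  then have cX: "card X = K" using Y(2) cX0 by simp
  have Xm: "X \<subseteq> min_vecs L" unfolding X_def using X0m Y(1) by auto
  have "span (outer_sq ` (range f \<union> X0)) \<subseteq> span (outer_sq ` (range f \<union> X))"
    unfolding X_def by (intro span_mono image_mono) auto
  then have "Sym \<subseteq> span (outer_sq ` (range f \<union> X))" using spX0 by blast
  then show ?thesis using Xm cX K_def by blast
qed


(* ---- part 13 ---- *)

lemma similar_sym:
  fixes L1 L2 :: "(real^'n::finite) set"
  assumes "similar_lat L1 L2" shows "similar_lat L2 L1"
proof -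
  obtain c f where cf: "c > 0" "orthogonal_transformation f" "L2 = (\<lambda>v. c *\<^sub>R f v) ` L1"
    using assms unfolding similar_lat_def by blast
  define g where "g = inv f"
  have g: "orthogonal_transformation g" unfolding g_def using orthogonal_transformation_inv[OF cf(2)] .
  have gf: "g (f v) = v" for v unfolding g_def using orthogonal_transformation_inj[OF cf(2)] by (simp add: inv_f_f)
  have "L1 = (\<lambda>v. (1/c) *\<^sub>R g v) ` L2"
  proof -
    have "(\<lambda>v. (1/c) *\<^sub>R g v) ` L2 = (\<lambda>v. (1/c) *\<^sub>R g (c *\<^sub>R f v)) ` L1"
      unfolding cf(3) by (simp add: image_image)
    also have "\<dots> = (\<lambda>v. v) ` L1"
      using cf(1) by (intro image_cong refl) (simp add: orthogonal_transformation_scaleR[OF g] gf)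
    finally show ?thesis by simp
  qed
  then show ?thesis unfolding similar_lat_def using g cf(1) by (intro exI[of _ "1/c"] exI[of _ g]) auto
qed

lemma similar_trans:
  fixes L1 L2 L3 :: "(real^'n::finite) set"
  assumes "similar_lat L1 L2" "similar_lat L2 L3" shows "similar_lat L1 L3"
proof -
  obtain c f where cf: "c > 0" "orthogonal_transformation f" "L2 = (\<lambda>v. c *\<^sub>R f v) ` L1"
    using assms(1) unfolding similar_lat_def by blast
  obtain c' f' where cf': "c' > 0" "orthogonal_transformation f'" "L3 = (\<lambda>v. c' *\<^sub>R f' v) ` L2"
    using assms(2) unfolding similar_lat_def by blast
  have "L3 = (\<lambda>v. (c' * c) *\<^sub>R (f' \<circ> f) v) ` L1"
    unfolding cf' cf by (simp add: image_image orthogonal_transformation_scaleR[OF cf'(2)])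
  moreover have "orthogonal_transformation (f' \<circ> f)" using orthogonal_transformation_compose cf cf' by blast
  ultimately show ?thesis unfolding similar_lat_def using cf(1) cf'(1) by (intro exI[of _ "c'*c"] exI[of _ "f' \<circ> f"]) auto
qed

lemma class_eq:
  fixes L1 L2 :: "(real^'n::finite) set"
  assumes "similar_lat L1 L2"
  shows "similarity_rel `` {L1} = similarity_rel `` {L2}"
proof
  show "similarity_rel `` {L1} \<subseteq> similarity_rel `` {L2}"
    unfolding similarity_rel_def using similar_sym[OF assms] similar_trans by blast
  show "similarity_rel `` {L2} \<subseteq> similarity_rel `` {L1}"
    unfolding similarity_rel_def using assms similar_trans by blast
qed

definition Cand :: "(real^'n::finite) set \<Rightarrow> (real^'n) set" where
  "Cand M = {c \<in> M. \<forall>i. \<bar>c$i\<bar> \<le> 1}"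

lemma Cand_card:
  fixes M :: "(real^'n::finite) set"
  assumes "finite (vfrac ` M)"
  shows "finite (Cand M) \<and> card (Cand M) \<le> card (vfrac ` M) * 3 ^ CARD('n)"
proof -
  define T :: "real set" where "T = {-1, 0, 1}"
  define h where "h c = (vfrac c, vfloor c)" for c :: "real^'n"
  have hin: "h ` Cand M \<subseteq> (vfrac ` M) \<times> vecset T"
  proof
    fix p assume "p \<in> h ` Cand M"
    then obtain c where c: "c \<in> M" "\<forall>i. \<bar>c$i\<bar> \<le> 1" "p = h c" unfolding Cand_def by auto
    have "vfloor c $ i \<in> T" for i
    proof -
      have "-1 \<le> c$i" "c$i \<le> 1" using c(2)[rule_format, of i] by auto
      then have a1: "-1 \<le> \<lfloor>c$i\<rfloor>" and a2: "\<lfloor>c$i\<rfloor> \<le> 1" by (simp_all add: le_floor_iff floor_le_iff)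
      then have "\<lfloor>c$i\<rfloor> = -1 \<or> \<lfloor>c$i\<rfloor> = 0 \<or> \<lfloor>c$i\<rfloor> = 1" by linarith
      then show ?thesis by (auto simp: vfloor_def T_def)
    qed
    then show "p \<in> (vfrac ` M) \<times> vecset T" using c by (auto simp: h_def vecset_def)
  qed
  have inj: "inj_on h (Cand M)"
  proof (rule inj_onI)
    fix x y assume "h x = h y"
    then have "vfrac x = vfrac y" "vfloor x = vfloor y" by (auto simp: h_def)
    then show "x = y" unfolding vfrac_def by (metis diff_add_cancel)
  qed
  have finT: "finite T" unfolding T_def by simp
  have cT: "card T = 3" unfolding T_def by simp
  have fin2: "finite ((vfrac ` M) \<times> (vecset T :: (real^'n) set))" by (rule finite_cartesian_product[OF assms finite_vecset[OF finT]])
  have "card (h ` Cand M) \<le> card ((vfrac ` M) \<times> (vecset T :: (real^'n) set))" using hin fin2 by (rule card_mono[rotated])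
  also have "\<dots> = card (vfrac ` M) * 3 ^ CARD('n)" by (simp add: card_cartesian_product card_vecset[OF finT] cT)
  finally have c1: "card (h ` Cand M) \<le> card (vfrac ` M) * 3 ^ CARD('n)" .
  have "finite (h ` Cand M)" using hin fin2 finite_subset by blast
  then have "finite (Cand M)" using inj finite_imageD by blast
  then show ?thesis using c1 card_image[OF inj] by simp
qed


(* ---- part 14 ---- *)

definition Good :: "(nat \<Rightarrow> 'n::finite) \<Rightarrow> nat \<Rightarrow> (real^'n) set \<Rightarrow>
    (((nat\<Rightarrow>nat)\<times>(nat\<Rightarrow>nat\<Rightarrow>nat)) \<times> (real^'n) set) \<Rightarrow> bool" where
 "Good \<sigma> I L \<delta> \<longleftrightarrow> (\<exists>f X. (\<forall>i. f i \<in> min_vecs L) \<and> invertible (cols f) \<and>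
    {c. cols f *v c \<in> L} = Zspan \<sigma> (fst (fst \<delta>)) (snd (fst \<delta>)) CARD('n) \<and>
    X \<subseteq> min_vecs L \<and> Sym \<subseteq> span (outer_sq ` (range f \<union> X)) \<and>
    snd \<delta> = (\<lambda>x. matrix_inv (cols f) *v x) ` X \<and>
    fst \<delta> \<in> DS CARD('n) I \<and> finite (vfrac ` {c. cols f *v c \<in> L}) \<and>
    card (vfrac ` {c. cols f *v c \<in> L}) \<le> I \<and>
    snd \<delta> \<subseteq> Cand {c. cols f *v c \<in> L} \<and> card (snd \<delta>) = CARD('n) choose 2)"

lemma cols_upd: "cols (f(k := w)) = (\<chi> i j. if j = k then w $ i else cols f $ i $ j)"
  by (simp add: cols_def vec_eq_iff)

lemma good_exists:
  fixes L :: "(real^'n::finite) set"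
  assumes sig: "bij_betw \<sigma> {..<CARD('n)} UNIV" and Llat: "is_lattice L" and perf: "perfect L"
  shows "\<exists>\<delta>. Good \<sigma> (I_const TYPE('n)) L \<delta>"
proof -
  define I where "I = I_const TYPE('n)"
  obtain B where B: "invertible B" "L = lat_of B" using Llat is_lattice_iff by blast
  define mv where "mv = min_vecs L"
  have finmv: "finite mv" unfolding mv_def B(2) using finite_min_vecs[OF B(1)] .
  have spmv: "span mv = UNIV" unfolding mv_def using perfect_wr[OF perf] .
  define F where "F = {f :: 'n \<Rightarrow> real^'n. \<forall>i. f i \<in> mv}"
  have F_eq: "F = PiE UNIV (\<lambda>_. mv)" unfolding F_def by (auto simp: PiE_UNIV_domain)
  have finF: "finite F" unfolding F_eq using finmv by (intro finite_PiE) auto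
  obtain g where g: "\<And>i. g i \<in> mv" "invertible (cols g)" using basis_from_span[OF spmv] by metis
  have gF: "g \<in> F" unfolding F_def using g by simp
  define D where "D = (\<lambda>f. \<bar>det (cols f)\<bar>) ` F"
  have finD: "finite D" unfolding D_def using finF by simp
  have neD: "D \<noteq> {}" unfolding D_def using gF by auto
  obtain f0 where f0F: "f0 \<in> F" and f0max: "\<bar>det (cols f0)\<bar> = Max D"
    using Max_in[OF finD neD] unfolding D_def by auto
  have maxf: "\<bar>det (cols f)\<bar> \<le> \<bar>det (cols f0)\<bar>" if "f \<in> F" for f
    unfolding f0max using that finD unfolding D_def by simp
  have "\<bar>det (cols g)\<bar> > 0" using g(2) invertible_det_nz by auto
  then have detf0: "det (cols f0) \<noteq> 0" using maxf[OF gF] by auto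
  define V where "V = cols f0"
  define Vi where "Vi = matrix_inv V"
  have Vinv: "invertible V" unfolding V_def using detf0 invertible_det_nz by blast
  have f0m: "f0 i \<in> min_vecs L" for i using f0F unfolding F_def mv_def by simp
  have f0L: "f0 i \<in> L" for i using f0m unfolding min_vecs_def by simp
  \<comment> \<open>Cramer bound\<close>
  have cram: "\<bar>(Vi *v w) $ k\<bar> \<le> 1" if w: "w \<in> min_vecs L" for w k
  proof -
    define c where "c = Vi *v w"
    have Vc: "V *v c = w" unfolding c_def Vi_def using Vinv by (simp add: matrix_inv_vr)
    have e1: "det (cols (f0(k := w))) = c $ k * det V"
      unfolding cols_upd V_def[symmetric] using cramer_lemma[where A=V and x=c and k=k] unfolding Vc .
    have "f0(k := w) \<in> F" using f0F w unfolding F_def mv_def by simp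
    then have "\<bar>det (cols (f0(k := w)))\<bar> \<le> \<bar>det (cols f0)\<bar>" by (rule maxf)
    then have "\<bar>c $ k * det V\<bar> \<le> \<bar>det V\<bar>" unfolding e1 V_def .
    then have "\<bar>c $ k\<bar> * \<bar>det V\<bar> \<le> 1 * \<bar>det V\<bar>" by (simp add: abs_mult)
    then show ?thesis using detf0 V_def c_def by (simp add: mult_le_cancel_right)
  qed
  \<comment> \<open>The sublattice generated from f0\<close>
  define L' where "L' = lat_of V"
  have L'sub: "L' \<subseteq> L" unfolding L'_def V_def using lat_of_cols_sub[OF Vinv[unfolded V_def], of B] f0L B(2) by auto
  have L'lat: "is_lattice L'" unfolding L'_def using Vinv is_lattice_iff by blast
  have f0L': "f0 i \<in> L'" for i
  proof -
    have "Vi *v f0 i = axis i 1" unfolding Vi_def V_def using Vinv[unfolded V_def] cols_axis[of f0 i]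
      by (metis matrix_inv_vl)
    then show ?thesis unfolding L'_def lat_of_def Vi_def by (simp add: isint_axis)
  qed
  have f0nz: "f0 i \<noteq> 0" for i using f0m unfolding min_vecs_def by simp
  have mvsub: "min_vecs L' \<subseteq> min_vecs L"
  proof
    fix v assume v: "v \<in> min_vecs L'"
    have vL: "v \<in> L" "v \<noteq> 0" using v L'sub unfolding min_vecs_def by auto
    have nv: "norm v \<le> norm (f0 undefined)" using v f0L' f0nz unfolding min_vecs_def by blast
    have "\<forall>w\<in>L. w \<noteq> 0 \<longrightarrow> norm v \<le> norm w"
    proof (intro ballI impI)
      fix w assume "w \<in> L" "w \<noteq> 0"
      then have "norm (f0 undefined) \<le> norm w" using f0m[of undefined] unfolding min_vecs_def by blast
      then show "norm v \<le> norm w" using nv by linarith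
    qed
    then show "v \<in> min_vecs L" unfolding min_vecs_def using vL by blast
  qed
  have f0mv': "f0 i \<in> min_vecs L'" for i
    using f0L' f0nz f0m L'sub unfolding min_vecs_def by blast
  have wr: "well_rounded L'"
  proof -
    have "x \<in> span (range f0)" for x
    proof -
      have "x = V *v (Vi *v x)" unfolding Vi_def using Vinv by (simp add: matrix_inv_vr)
      also have "\<dots> = (\<Sum>i\<in>UNIV. (Vi *v x)$i *\<^sub>R f0 i)" unfolding V_def by (rule cols_mult)
      finally show ?thesis by (metis (no_types, lifting) rangeI span_base span_scale span_sum)
    qed
    moreover have "span (range f0) \<subseteq> span (min_vecs L')" using f0mv' by (intro span_mono) auto
    ultimately show ?thesis unfolding well_rounded_def by auto
  qed
  have idxI: "lat_index L L' \<le> I" unfolding I_def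
    using I_const_prop[OF Llat L'lat L'sub wr mvsub] .
  have finC: "finite ((\<lambda>v. {w \<in> L. w - v \<in> L'}) ` L)"
    using index_finite_bound[OF Llat L'lat L'sub wr mvsub] by blast
  \<comment> \<open>Coordinates\<close>
  define M where "M = {c. V *v c \<in> L}"
  have M_img: "M = (\<lambda>x. Vi *v x) ` L"
  proof (intro set_eqI iffI)
    fix c assume "c \<in> M"
    then have "V *v c \<in> L" "Vi *v (V *v c) = c" unfolding M_def Vi_def using Vinv by (auto simp: matrix_inv_vl)
    then show "c \<in> (\<lambda>x. Vi *v x) ` L" by (metis image_eqI)
  next
    fix c assume "c \<in> (\<lambda>x. Vi *v x) ` L"
    then obtain x where "x \<in> L" "c = Vi *v x" by auto
    then show "c \<in> M" unfolding M_def Vi_def using Vinv by (simp add: matrix_inv_vr)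
  qed
  have LM: "V *v c \<in> L \<longleftrightarrow> c \<in> M" for c unfolding M_def by simp
  have M0: "0 \<in> M" unfolding M_def B(2) by (simp add: lat_of_0)
  have Madd: "x + y \<in> M" if "x \<in> M" "y \<in> M" for x y
    using that lat_of_add unfolding M_def B(2) by (simp add: matrix_vector_right_distrib)
  have Mdiff: "x - y \<in> M" if "x \<in> M" "y \<in> M" for x y
    using that lat_of_diff unfolding M_def B(2) by (simp add: matrix_vector_mult_diff_distrib)
  have Mint: "x \<in> M" if "isint x" for x
  proof -
    have "V *v x \<in> L'" unfolding L'_def lat_of_def using Vinv that by (simp add: matrix_inv_vl)
    then show ?thesis using L'sub unfolding M_def by auto
  qed
  have vfM: "finite (vfrac ` M) \<and> card (vfrac ` M) \<le> lat_index L L'"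
  proof -
    have "\<forall>x\<in>L. \<forall>y\<in>L. {w \<in> L. w - x \<in> L'} = {w \<in> L. w - y \<in> L'} \<longrightarrow> vfrac (Vi *v x) = vfrac (Vi *v y)"
    proof (intro ballI impI)
      fix x y assume xy: "x \<in> L" "y \<in> L" "{w \<in> L. w - x \<in> L'} = {w \<in> L. w - y \<in> L'}"
      have "0 \<in> L'" unfolding L'_def by (rule lat_of_0)
      then have "y \<in> {w \<in> L. w - y \<in> L'}" using xy(2) by simp
      then have "y \<in> {w \<in> L. w - x \<in> L'}" by (simp only: xy(3))
      then have "y - x \<in> L'" by simp
      then have "isint (Vi *v y - Vi *v x)" unfolding L'_def lat_of_def Vi_def by (simp add: matrix_vector_mult_diff_distrib)
      then show "vfrac (Vi *v x) = vfrac (Vi *v y)" using vfrac_eq_iff by (metis isint_minus minus_diff_eq)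
    qed
    from card_factor[OF this finC]
    have "finite ((\<lambda>x. vfrac (Vi *v x)) ` L) \<and> card ((\<lambda>x. vfrac (Vi *v x)) ` L) \<le> lat_index L L'"
      unfolding lat_index_def by simp
    moreover have "(\<lambda>x. vfrac (Vi *v x)) ` L = vfrac ` M" unfolding M_img by (simp add: image_image)
    ultimately show ?thesis by simp
  qed
  then have vfI: "card (vfrac ` M) \<le> I" using idxI by simp
  interpret H: hnf \<sigma> M
    using sig M0 Madd Mdiff Mint vfM by unfold_locales auto
  obtain a k where ak: "(a,k) \<in> DS (CARD('n)) I" "M = Zspan \<sigma> a k (CARD('n))"
    using H.hnf_result[OF vfI] by blast
  obtain X where X: "X \<subseteq> min_vecs L" "card X = (CARD('n) choose 2)" "Sym \<subseteq> span (outer_sq ` (range f0 \<union> X))"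
    using choose_X[OF perf _ f0m Vinv[unfolded V_def]] finmv mv_def by blast
  define S where "S = (\<lambda>x. Vi *v x) ` X"
  have injVi: "inj (\<lambda>x. Vi *v x)"
    by (rule injI) (metis Vi_def Vinv matrix_inv_vr)
  have cS: "card S = (CARD('n) choose 2)" unfolding S_def using X(2) card_image[OF inj_on_subset[OF injVi subset_UNIV]] by simp
  have SC: "S \<subseteq> Cand M"
  proof
    fix c assume "c \<in> S"
    then obtain x where x: "x \<in> X" "c = Vi *v x" unfolding S_def by auto
    have "x \<in> L" using x X(1) unfolding min_vecs_def by auto
    then have "c \<in> M" unfolding M_img using x by simp
    moreover have "\<bar>c $ i\<bar> \<le> 1" for i using cram x X(1) by blast
    ultimately show "c \<in> Cand M" unfolding Cand_def by simp
  qed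
  have "Good \<sigma> I L ((a,k), S)"
    unfolding Good_def
    apply (rule exI[of _ f0], rule exI[of _ X])
    using f0m Vinv ak X S_def vfM vfI SC cS unfolding V_def Vi_def M_def by auto
  then show ?thesis unfolding I_def by blast
qed


(* ---- part 15 ---- *)

lemma smat: "((k::real) *\<^sub>R mat 1) *v (v::real^'n::finite) = k *\<^sub>R v"
  by (metis scaleR_matrix_vector_assoc matrix_vector_mul_lid)

lemma good_similar:
  fixes L1 L2 :: "(real^'n::finite) set"
  assumes G1: "Good \<sigma> I L1 \<delta>" and G2: "Good \<sigma> I L2 \<delta>"
  shows "similar_lat L1 L2"
proof -
  obtain f1 X1 where g1: "\<forall>i. f1 i \<in> min_vecs L1" "invertible (cols f1)"
    "{c. cols f1 *v c \<in> L1} = Zspan \<sigma> (fst (fst \<delta>)) (snd (fst \<delta>)) CARD('n)"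
    "X1 \<subseteq> min_vecs L1" "Sym \<subseteq> span (outer_sq ` (range f1 \<union> X1))"
    "snd \<delta> = (\<lambda>x. matrix_inv (cols f1) *v x) ` X1"
    using G1 unfolding Good_def by blast
  obtain f2 X2 where g2: "\<forall>i. f2 i \<in> min_vecs L2" "invertible (cols f2)"
    "{c. cols f2 *v c \<in> L2} = Zspan \<sigma> (fst (fst \<delta>)) (snd (fst \<delta>)) CARD('n)"
    "X2 \<subseteq> min_vecs L2"
    "snd \<delta> = (\<lambda>x. matrix_inv (cols f2) *v x) ` X2"
    using G2 unfolding Good_def by blast
  define V1 where "V1 = cols f1"
  define V2 where "V2 = cols f2"
  define W1 where "W1 = matrix_inv V1"
  define W2 where "W2 = matrix_inv V2"
  have I1: "invertible V1" and I2: "invertible V2" using g1(2) g2(2) unfolding V1_def V2_def by auto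
  have Meq: "V1 *v c \<in> L1 \<longleftrightarrow> V2 *v c \<in> L2" for c
  proof -
    have "{c. V1 *v c \<in> L1} = {c. V2 *v c \<in> L2}" using g1(3) g2(3) unfolding V1_def V2_def by simp
    then show ?thesis by blast
  qed
  define T where "T = V2 ** W1"
  have Tv: "T *v v = V2 *v (W1 *v v)" for v unfolding T_def by (simp add: matrix_vector_mul_assoc)
  have L2eq: "L2 = (\<lambda>v. T *v v) ` L1"
  proof (intro set_eqI iffI)
    fix y assume y: "y \<in> L2"
    define x where "x = V1 *v (W2 *v y)"
    have "V2 *v (W2 *v y) \<in> L2" using y I2 unfolding W2_def by (simp add: matrix_inv_vr)
    then have xL: "x \<in> L1" unfolding x_def using Meq by blast
    have "T *v x = y" unfolding Tv x_def W1_def W2_def using I1 I2 by (simp add: matrix_inv_vl matrix_inv_vr)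
    then show "y \<in> (\<lambda>v. T *v v) ` L1" using xL by (metis image_eqI)
  next
    fix y assume "y \<in> (\<lambda>v. T *v v) ` L1"
    then obtain x where x: "x \<in> L1" "y = T *v x" by auto
    have "V1 *v (W1 *v x) \<in> L1" using x I1 unfolding W1_def by (simp add: matrix_inv_vr)
    then show "y \<in> L2" using Meq x unfolding Tv by blast
  qed
  define l1 where "l1 = norm (f1 undefined)"
  define l2 where "l2 = norm (f2 undefined)"
  have l1p: "l1 > 0" using g1(1) unfolding l1_def min_vecs_def by auto
  have l2p: "l2 > 0" using g2(1) unfolding l2_def min_vecs_def by auto
  have norms: "norm v = l1 \<and> norm (T *v v) = l2" if v: "v \<in> range f1 \<union> X1" for v
  proof -
    have vm: "v \<in> min_vecs L1" using v g1(1,4) by auto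
    have n1: "norm v = l1" unfolding l1_def using min_vecs_norm_eq[OF vm g1(1)[rule_format]] .
    have "T *v v \<in> min_vecs L2"
    proof (cases "v \<in> range f1")
      case True
      then obtain i where vi: "v = f1 i" by auto
      have "W1 *v v = axis i 1" unfolding vi W1_def V1_def using g1(2) cols_axis[of f1 i]
        by (metis matrix_inv_vl)
      then have "T *v v = f2 i" unfolding Tv by (simp add: V2_def cols_axis)
      then show ?thesis using g2(1) by simp
    next
      case False
      then have "v \<in> X1" using v by simp
      then have "W1 *v v \<in> snd \<delta>" unfolding g1(6) W1_def V1_def by simp
      then obtain x2 where x2: "x2 \<in> X2" "W1 *v v = W2 *v x2" unfolding g2(5) W2_def V2_def by auto
      have "T *v v = x2" unfolding Tv x2(2) W2_def using I2 by (simp add: matrix_inv_vr)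
      then show ?thesis using x2(1) g2(4) by auto
    qed
    then have "norm (T *v v) = l2" unfolding l2_def using min_vecs_norm_eq g2(1) by blast
    then show ?thesis using n1 by simp
  qed
  define \<mu> where "\<mu> = (l2 / l1)^2"
  define G where "G = transpose T ** T - \<mu> *\<^sub>R mat 1"
  have GSym: "G \<in> Sym"
  proof -
    have "transpose (transpose T ** T) = transpose T ** T" by (simp add: matrix_transpose_mul)
    then have a: "transpose T ** T \<in> Sym" unfolding Sym_def by simp
    have "transpose (\<mu> *\<^sub>R mat 1 :: real^'n^'n) = \<mu> *\<^sub>R mat 1" by (simp add: transpose_scalar)
    then have b: "\<mu> *\<^sub>R mat 1 \<in> (Sym :: (real^'n^'n) set)" unfolding Sym_def by simp
    show ?thesis unfolding G_def using subspace_diff[OF subspace_Sym a b] .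
  qed
  have Gorth: "orthogonal G y" if yy: "y \<in> outer_sq ` (range f1 \<union> X1)" for y
  proof -
    obtain v where v: "v \<in> range f1 \<union> X1" "y = outer_sq v" using yy by blast
    have "inner y G = v \<bullet> ((transpose T ** T) *v v) - \<mu> * (v \<bullet> v)"
      unfolding v(2) G_def by (simp add: inner_diff_right inner_outer_quad)
    also have "\<dots> = (norm (T *v v))^2 - \<mu> * (norm v)^2" by (simp add: quad_TT power2_norm_eq_inner)
    also have "\<dots> = 0" using norms[OF v(1)] l1p unfolding \<mu>_def by (simp add: power_divide)
    finally show ?thesis by (simp add: orthogonal_def inner_commute)
  qed
  have "G \<in> span (outer_sq ` (range f1 \<union> X1))" using GSym g1(5) by blast
  then have "orthogonal G G" using Gorth orthogonal_to_span by blast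
  then have G0: "G = 0" by (simp add: orthogonal_def)
  then have TT: "transpose T ** T = \<mu> *\<^sub>R mat 1" unfolding G_def by simp
  define c where "c = l2 / l1"
  have cp: "c > 0" unfolding c_def using l1p l2p by simp
  define h where "h v = (1/c) *\<^sub>R (T *v v)" for v
  have nT: "norm (T *v v) = c * norm v" for v
  proof -
    have "(norm (T *v v))^2 = v \<bullet> ((transpose T ** T) *v v)" by (simp add: quad_TT power2_norm_eq_inner)
    also have "\<dots> = \<mu> * (norm v)^2" unfolding TT smat by (simp add: power2_norm_eq_inner)
    also have "\<dots> = (c * norm v)^2" unfolding \<mu>_def c_def by (simp add: power_mult_distrib power_divide)
    finally show ?thesis using cp by (simp add: power2_eq_iff_nonneg)
  qed
  have lin: "linear h" unfolding h_def
    by (simp add: linear_iff matrix_vector_right_distrib matrix_vector_mult_scaleR algebra_simps)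
  have nh: "norm (h v) = norm v" for v unfolding h_def using cp by (simp add: nT)
  have orth: "orthogonal_transformation h" unfolding orthogonal_transformation using lin nh by blast
  have "L2 = (\<lambda>v. c *\<^sub>R h v) ` L1" unfolding L2eq h_def using cp by simp
  then show ?thesis unfolding similar_lat_def using cp orth by blast
qed


(* ---- part 16 ---- *)

theorem theorem10p1:
  assumes "CARD('n::finite) \<ge> 2"
  shows "finite ({L :: (real^'n) set. is_lattice L \<and> perfect L} // similarity_rel) \<and>
    card ({L :: (real^'n) set. is_lattice L \<and> perfect L} // similarity_rel)
      \<le> I_const TYPE('n) ^ (CARD('n) + 1)
         * ((3 ^ CARD('n) * I_const TYPE('n)) choose (CARD('n) choose 2))"
proof -
  define d where "d = CARD('n)"
  define I where "I = I_const TYPE('n)"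
  define K where "K = d choose 2"
  define C where "C = (3 ^ d * I) choose K"
  obtain \<sigma> :: "nat \<Rightarrow> 'n" where sig0: "bij_betw \<sigma> {0..<card (UNIV::'n set)} UNIV"
    using ex_bij_betw_nat_finite[of "UNIV::'n set"] by auto
  have sig: "bij_betw \<sigma> {..<CARD('n)} UNIV" using sig0 by (simp add: atLeast0LessThan)
  define P where "P = {L :: (real^'n) set. is_lattice L \<and> perfect L}"
  define data where "data L = (SOME \<delta>. Good \<sigma> I L \<delta>)" for L
  have good: "Good \<sigma> I L (data L)" if "L \<in> P" for L
  proof -
    have "\<exists>\<delta>. Good \<sigma> I L \<delta>" using good_exists[OF sig] that unfolding P_def I_def by blast
    then show ?thesis unfolding data_def by (rule someI_ex)
  qed
  define cls where "cls L = similarity_rel `` {L}" for L :: "(real^'n) set"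
  have Q: "P // similarity_rel = cls ` P" unfolding quotient_def cls_def by auto
  define Z where "Z ak = Zspan \<sigma> (fst ak) (snd ak) d" for ak
  define A where "A = {ak \<in> DS d I. finite (vfrac ` Z ak) \<and> card (vfrac ` Z ak) \<le> I}"
  define Dset where "Dset = (SIGMA ak:A. {S. S \<subseteq> Cand (Z ak) \<and> card S = K})"
  have sub: "data ` P \<subseteq> Dset"
  proof
    fix \<delta> assume "\<delta> \<in> data ` P"
    then obtain L where L: "L \<in> P" "\<delta> = data L" by auto
    then have "Good \<sigma> I L \<delta>" using good by simp
    then obtain f X where
      g3: "{c. cols f *v c \<in> L} = Zspan \<sigma> (fst (fst \<delta>)) (snd (fst \<delta>)) CARD('n)" and
      g7: "fst \<delta> \<in> DS CARD('n) I" and g8: "finite (vfrac ` {c. cols f *v c \<in> L})" and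
      g9: "card (vfrac ` {c. cols f *v c \<in> L}) \<le> I" and
      g10: "snd \<delta> \<subseteq> Cand {c. cols f *v c \<in> L}" and g11: "card (snd \<delta>) = CARD('n) choose 2"
      unfolding Good_def by blast
    have zz: "{c. cols f *v c \<in> L} = Z (fst \<delta>)" unfolding Z_def d_def using g3 by simp
    have "fst \<delta> \<in> A" unfolding A_def using g7 g8 g9 unfolding zz d_def by simp
    moreover have "snd \<delta> \<in> {S. S \<subseteq> Cand (Z (fst \<delta>)) \<and> card S = K}"
      using g10 g11 unfolding zz K_def d_def by simp
    ultimately have "(fst \<delta>, snd \<delta>) \<in> Dset" unfolding Dset_def by (rule SigmaI)
    then show "\<delta> \<in> Dset" by simp
  qed
  have DSf: "finite (DS d I)" "card (DS d I) \<le> I ^ d" using DS_card[of d I] by auto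
  have AD: "A \<subseteq> DS d I" unfolding A_def by blast
  have finA: "finite A" using AD DSf(1) finite_subset by blast
  have cA: "card A \<le> I ^ d" using card_mono[OF DSf(1) AD] DSf(2) by simp
  have fib: "finite {S. S \<subseteq> Cand (Z ak) \<and> card S = K} \<and> card {S. S \<subseteq> Cand (Z ak) \<and> card S = K} \<le> C"
    if ak: "ak \<in> A" for ak
  proof -
    have f1: "finite (vfrac ` Z ak)" "card (vfrac ` Z ak) \<le> I" using ak unfolding A_def by auto
    have cc: "finite (Cand (Z ak)) \<and> card (Cand (Z ak)) \<le> card (vfrac ` Z ak) * 3 ^ d"
      using Cand_card[OF f1(1)] unfolding d_def by simp
    then have "card (Cand (Z ak)) \<le> 3 ^ d * I" using f1(2)
      by (metis mult.commute mult_le_mono2 order_trans)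
    moreover have "card {S. S \<subseteq> Cand (Z ak) \<and> card S = K} = card (Cand (Z ak)) choose K"
      using n_subsets cc by blast
    ultimately show ?thesis unfolding C_def using cc
      by (simp add: binomial_right_mono finite_subset[of _ "Pow (Cand (Z ak))"] subset_eq)
  qed
  have finD: "finite Dset" unfolding Dset_def using finA fib by (intro finite_SigmaI) auto
  have "card Dset = (\<Sum>ak\<in>A. card {S. S \<subseteq> Cand (Z ak) \<and> card S = K})"
    unfolding Dset_def using finA fib by (intro card_SigmaI) auto
  also have "\<dots> \<le> (\<Sum>ak\<in>A. C)" using fib by (intro sum_mono) auto
  also have "\<dots> = card A * C" by simp
  also have "\<dots> \<le> I ^ d * C" using cA by simp
  also have "\<dots> \<le> I ^ (d + 1) * C"
  proof (cases "I = 0")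
    case True then show ?thesis using assms d_def by simp
  next
    case False then show ?thesis by (intro mult_right_mono power_increasing) auto
  qed
  finally have cD: "card Dset \<le> I ^ (d + 1) * C" .
  have fdata: "finite (data ` P)" using sub finD finite_subset by blast
  have fac: "\<forall>x\<in>P. \<forall>y\<in>P. data x = data y \<longrightarrow> cls x = cls y"
  proof (intro ballI impI)
    fix x y assume xy: "x \<in> P" "y \<in> P" "data x = data y"
    have "similar_lat x y" using good_similar[OF good[OF xy(1)]] good[OF xy(2)] xy(3) by simp
    then show "cls x = cls y" unfolding cls_def by (rule class_eq)
  qed
  have "finite (cls ` P) \<and> card (cls ` P) \<le> card (data ` P)" by (rule card_factor[OF fac fdata])
  moreover have "card (data ` P) \<le> card Dset" using sub finD by (rule card_mono[rotated])
  ultimately have "finite (P // similarity_rel) \<and> card (P // similarity_rel) \<le> I ^ (d + 1) * C"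
    using cD unfolding Q by linarith
  then show ?thesis unfolding P_def I_def C_def K_def d_def .
qed


end
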